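(* Let $(\rho,\mu)$ be a pair of standard representations of $\mathcal{W}_N$ with $\rho\otimes\mu$ cyclic, and let $h_{\rho,\mu}\in\mathbb{C}^*$. For $\alpha\in\mathbb{Z}/N$ define linear maps $K_\alpha(\rho,\mu):V_{\rho\mu}\to V_\rho\otimes V_\mu$ and $\bar K^\alpha(\rho,\mu):V_\rho\otimes V_\mu\to V_{\rho\mu}$ by $K_\alpha(\rho,\mu)(e_k)=\sum_{i,j}K_\alpha(\rho,\mu)^k_{i,j}e_i\otimes e_j$ and $\bar K^\alpha(\rho,\mu)(e_i\otimes e_j)=\sum_k\bar K^\alpha(\rho,\mu)^{i,j}_k e_k$, where $$K_\alpha(\rho,\mu)^k_{i,j}=h_{\rho,\mu}\,\omega^{\alpha j}\,\omega\Big(a_\rho y_\mu,\frac{y_\rho}{a_\mu},y_{\rho\mu}\,\Big|\,i,\alpha\Big)\delta(i+j-k),$$ $$\bar K^\alpha(\rho,\mu)^{i,j}_k=\frac{\big[\frac{a_\rho y_\mu}{y_{\rho\mu}}\big]}{h_{\rho,\mu}}\;\frac{\omega^{-\alpha j}\,\delta(i+j-k)}{\omega\big(\frac{a_\rho y_\mu}{\omega},\frac{y_\rho}{a_\mu},y_{\rho\mu}\,\big|\,i,\alpha\big)}.$$ Then $\{K_\alpha(\rho,\mu)\}_\alpha$ is a basis of $\mathrm{Hom}_{\mathcal{W}_N}(V_{\rho\mu},V_\rho\otimes V_\mu)$, $\{\bar K^\alpha(\rho,\mu)\}_\alpha$ is a basis of $\mathrm{Hom}_{\mathcal{W}_N}(V_\rho\otimes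 V_\mu,V_{\rho\mu})$, and these bases are dual: $$\bar K^\alpha(\rho,\mu)K_\beta(\rho,\mu)=\delta(\alpha-\beta)\,\mathrm{id}_{V_{\rho\mu}},\qquad\sum_{\alpha}K_\alpha(\rho,\mu)\bar K^\alpha(\rho,\mu)=\mathrm{id}_{V_\rho}\otimes\mathrm{id}_{V_\mu}.$$
   Context: $N\ge3$ odd, $N=2P+1$, $\omega=e^{2\pi i/N}$, $\omega^{1/2}:=\omega^{P+1}$ and $\omega^{n^2/2}:=(\omega^{P+1})^{n^2}$. Indices run over $\mathbb{Z}/N$; $\delta(n)=1$ if $n\equiv0\pmod N$, else $0$; $(e_i)$ is the canonical basis of $\mathbb{C}^N$. $\mathcal{W}_N$ is the unital $\mathbb{C}$-algebra generated by $E,E^{-1},D$ with $EE^{-1}=E^{-1}E=1$, $ED=\omega DE$, Hopf structure $\Delta(E)=E\otimes E$, $\Delta(D)=E\otimes D+D\otimes1$; tensor products of representations are via $\Delta$; a representation is cyclic if $E,D$ act invertibly. With $X_{ij}=\delta(i-j-1)$, $Z_{ij}=\omega^i\delta(i-j)$, the standard representation $\rho$ with parameters $(a_\rho,y_\rho)\in(\mathbb{C}^* )^2$ is $\rho(E)=a_\rho^2Z$, $\rho(D)=a_\rho y_\rho X$ on $V_\rho=\mathbb{C}^N$. A determination $u\mapsto u^{1/N}$ of the $N$-th root is fixed; $\rho\mu$ is the standard representation with $a_{\rho\mu}=a_\rho a_\mu$, $y_{\rho\mu}=(a_\rho^Ny_\mu^N+y_\rho^Na_\mu^{-N})^{1/N}$.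 For $x,y,z\in\mathbb{C}^*$ with $x^N+y^N=z^N$: $\omega(x,y,z|n)=\prod_{j=1}^n\frac{y}{z-x\omega^j}$ for $0\le n\le N-1$, extended $N$-periodically to $n\in\mathbb{Z}$, and $\omega(x,y,z|m,n)=\omega(x,y,z|m-n)\omega^{n^2/2}$. $[x]=N^{-1}\frac{1-x^N}{1-x}$. *)

theory Defs
  imports Complex_Main
begin

text \<open>Indices of Z/N are represented by naturals in {0..<N}; integer arguments are
  reduced mod N where the paper reads them in Z/N.\<close>

definition omg :: "nat \<Rightarrow> complex" where
  "omg N = cis (2 * pi / real N)"

text \<open>omega^(1/2) := omega^(P+1), N = 2P+1\<close>
definition omg_half :: "nat \<Rightarrow> complex" where
  "omg_half N = omg N ^ ((N - 1) div 2 + 1)"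

definition dlt :: "nat \<Rightarrow> int \<Rightarrow> complex" where
  "dlt N n = (if n mod int N = 0 then 1 else 0)"

definition qdl :: "nat \<Rightarrow> complex \<Rightarrow> complex \<Rightarrow> complex \<Rightarrow> int \<Rightarrow> complex" where
  "qdl N x y z n = (\<Prod>j = 1..nat (n mod int N). y / (z - x * omg N ^ j))"

definition qdl2 :: "nat \<Rightarrow> complex \<Rightarrow> complex \<Rightarrow> complex \<Rightarrow> int \<Rightarrow> int \<Rightarrow> complex" where
  "qdl2 N x y z m n = qdl N x y z (m - n) * omg_half N ^ nat (n\<^sup>2)"

definition qbr :: "nat \<Rightarrow> complex \<Rightarrow> complex" where
  "qbr N x = (1 - x ^ N) / (of_nat N * (1 - x))"

section \<open>Matrices of linear maps (entries: output index, input index)\<close>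

type_synonym ('a, 'b) mat = "'a \<Rightarrow> 'b \<Rightarrow> complex"

definition mcomp :: "'b set \<Rightarrow> ('a, 'b) mat \<Rightarrow> ('b, 'c) mat \<Rightarrow> ('a, 'c) mat" where
  "mcomp J A B = (\<lambda>x z. \<Sum>y\<in>J. A x y * B y z)"

definition meq :: "'a set \<Rightarrow> 'b set \<Rightarrow> ('a, 'b) mat \<Rightarrow> ('a, 'b) mat \<Rightarrow> bool" where
  "meq I J A B \<longleftrightarrow> (\<forall>x\<in>I. \<forall>y\<in>J. A x y = B x y)"

definition mid :: "('a, 'a) mat" where
  "mid = (\<lambda>x y. if x = y then 1 else 0)"

definition tens :: "('a, 'b) mat \<Rightarrow> ('c, 'd) mat \<Rightarrow> ('a \<times> 'c, 'b \<times> 'd) mat" where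
  "tens A B = (\<lambda>(i, j) (k, l). A i k * B j l)"

definition minvertible :: "'a set \<Rightarrow> ('a, 'a) mat \<Rightarrow> bool" where
  "minvertible I A \<longleftrightarrow> (\<exists>B. meq I I (mcomp I A B) mid \<and> meq I I (mcomp I B A) mid)"

section \<open>Representations of W_N, given by the images of the generators E, E^{-1}, D\<close>

record 'a wrep =
  rE :: "('a, 'a) mat"
  rEi :: "('a, 'a) mat"
  rD :: "('a, 'a) mat"

definition Vidx :: "nat \<Rightarrow> nat set" where
  "Vidx N = {0..<N}"

text \<open>Standard representation with parameters (a,y): E -> a^2 Z, E^{-1} -> a^{-2} Z^{-1}, D -> a y X\<close>
definition stdrep :: "nat \<Rightarrow> complex \<Rightarrow> complex \<Rightarrow> nat wrep" where
  "stdrep N a y =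
     \<lparr> rE = (\<lambda>i j. a ^ 2 * (omg N ^ i * dlt N (int i - int j))),
       rEi = (\<lambda>i j. inverse a ^ 2 * (inverse (omg N) ^ i * dlt N (int i - int j))),
       rD = (\<lambda>i j. a * y * dlt N (int i - int j - 1)) \<rparr>"

text \<open>Tensor product via Delta(E) = E (x) E, Delta(E^{-1}) = E^{-1} (x) E^{-1}, Delta(D) = E (x) D + D (x) 1\<close>
definition tensrep :: "'a wrep \<Rightarrow> 'b wrep \<Rightarrow> ('a \<times> 'b) wrep" where
  "tensrep R S =
     \<lparr> rE = tens (rE R) (rE S),
       rEi = tens (rEi R) (rEi S),
       rD = (\<lambda>x y. tens (rE R) (rD S) x y + tens (rD R) mid x y) \<rparr>"

definition cyclic_rep :: "'a set \<Rightarrow> 'a wrep \<Rightarrow> bool" where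
  "cyclic_rep I R \<longleftrightarrow> minvertible I (rE R) \<and> minvertible I (rD R)"

text \<open>T : V_R -> V_S (indices I of source, J of target) is a W_N-module map\<close>
definition is_hom :: "'a set \<Rightarrow> 'a wrep \<Rightarrow> 'b set \<Rightarrow> 'b wrep \<Rightarrow> ('b, 'a) mat \<Rightarrow> bool" where
  "is_hom I R J S T \<longleftrightarrow>
     meq J I (mcomp J (rE S) T) (mcomp I T (rE R)) \<and>
     meq J I (mcomp J (rEi S) T) (mcomp I T (rEi R)) \<and>
     meq J I (mcomp J (rD S) T) (mcomp I T (rD R))"

definition is_hom_basis :: "nat \<Rightarrow> 'a set \<Rightarrow> 'a wrep \<Rightarrow> 'b set \<Rightarrow> 'b wrep \<Rightarrow> (nat \<Rightarrow> ('b, 'a) mat) \<Rightarrow> bool" where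
  "is_hom_basis N I R J S K \<longleftrightarrow>
     (\<forall>\<alpha><N. is_hom I R J S (K \<alpha>)) \<and>
     (\<forall>c. meq J I (\<lambda>x y. \<Sum>\<alpha><N. c \<alpha> * K \<alpha> x y) (\<lambda>_ _. 0) \<longrightarrow> (\<forall>\<alpha><N. c \<alpha> = 0)) \<and>
     (\<forall>T. is_hom I R J S T \<longrightarrow> (\<exists>c. meq J I T (\<lambda>x y. \<Sum>\<alpha><N. c \<alpha> * K \<alpha> x y)))"

text \<open>y_{rho mu} = (a_rho^N y_mu^N + y_rho^N a_mu^{-N})^{1/N} for a fixed determination rt\<close>
definition yprod :: "nat \<Rightarrow> (complex \<Rightarrow> complex) \<Rightarrow> complex \<Rightarrow> complex \<Rightarrow> complex \<Rightarrow> complex \<Rightarrow> complex" where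
  "yprod N rt ar yr am ym = rt (ar ^ N * ym ^ N + yr ^ N * inverse am ^ N)"

definition Kmap :: "nat \<Rightarrow> (complex \<Rightarrow> complex) \<Rightarrow> complex \<Rightarrow> complex \<Rightarrow> complex \<Rightarrow> complex \<Rightarrow> complex
    \<Rightarrow> nat \<Rightarrow> (nat \<times> nat, nat) mat" where
  "Kmap N rt h ar yr am ym \<alpha> = (\<lambda>(i, j) k.
     h * omg N ^ (\<alpha> * j)
       * qdl2 N (ar * ym) (yr / am) (yprod N rt ar yr am ym) (int i) (int \<alpha>)
       * dlt N (int i + int j - int k))"

definition Kbar :: "nat \<Rightarrow> (complex \<Rightarrow> complex) \<Rightarrow> complex \<Rightarrow> complex \<Rightarrow> complex \<Rightarrow> complex \<Rightarrow> complex
    \<Rightarrow> nat \<Rightarrow> (nat, nat \<times> nat) mat" where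
  "Kbar N rt h ar yr am ym \<alpha> = (\<lambda>k (i, j).
     qbr N (ar * ym / yprod N rt ar yr am ym) / h
       * (inverse (omg N) ^ (\<alpha> * j) * dlt N (int i + int j - int k)
          / qdl2 N (ar * ym / omg N) (yr / am) (yprod N rt ar yr am ym) (int i) (int \<alpha>)))"

end

theory Submission
  imports Defs "HOL-Computational_Algebra.Polynomial"
begin

definition w :: "nat \<Rightarrow> int \<Rightarrow> complex" where
  "w N n = omg N ^ nat (n mod int N)"

lemma omg_pow_N: "N > 0 \<Longrightarrow> omg N ^ N = 1"
  by (simp add: omg_def DeMoivre)

lemma omg_nz: "omg N \<noteq> 0" by (simp add: omg_def)

lemma omg_pow_mod: "N > 0 \<Longrightarrow> omg N ^ n = omg N ^ (n mod N)"
proof -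
  assume "N > 0"
  have "omg N ^ n = omg N ^ (N * (n div N) + n mod N)" by simp
  also have "\<dots> = (omg N ^ N) ^ (n div N) * omg N ^ (n mod N)" by (metis power_add power_mult)
  finally show ?thesis using omg_pow_N[OF \<open>N>0\<close>] by simp
qed

lemma omg_pow_w: "N > 0 \<Longrightarrow> omg N ^ n = w N (int n)"
  unfolding w_def by (subst omg_pow_mod) (auto simp: nat_mod_as_int)

lemma w_mod: "w N (n mod int N) = w N n" by (simp add: w_def)

lemma w_add: assumes "N > 0" shows "w N (a + b) = w N a * w N b"
proof -
  have "w N a * w N b = omg N ^ (nat (a mod int N) + nat (b mod int N))"
    by (simp add: w_def power_add)
  also have "\<dots> = w N (int (nat (a mod int N) + nat (b mod int N)))" by (rule omg_pow_w[OF assms])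
  also have "\<dots> = w N (a + b)"
  proof -
    have "int (nat (a mod int N) + nat (b mod int N)) = a mod int N + b mod int N" using assms by simp
    thus ?thesis by (simp add: w_def mod_add_eq)
  qed
  finally show ?thesis by simp
qed

lemma w_0[simp]: "w N 0 = 1" by (simp add: w_def)

lemma w_nz: "w N a \<noteq> 0" by (simp add: w_def omg_nz)

lemma w_minus: assumes "N > 0" shows "w N (- a) = inverse (w N a)"
proof -
  have "w N (-a) * w N a = 1" using w_add[OF assms, of "-a" a] by simp
  thus ?thesis by (simp add: field_simps w_nz)
qed

lemma w_diff: assumes "N > 0" shows "w N (a - b) = w N a / w N b"
proof -
  have "w N (a - b) * w N b = w N a" using w_add[OF assms, of "a - b" b] by simp
  thus ?thesis by (simp add: field_simps w_nz)
qed

lemma omg_inj: assumes "N > 0" "i < N" "j < N" "omg N ^ i = omg N ^ j" shows "i = j"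
proof -
  have b: "inj_on (\<lambda>k. cis (2 * pi * real k / real N)) {..<N}"
    using bij_betw_roots_unity[OF assms(1)] by (simp add: bij_betw_def)
  have "cis (2 * pi * real i / real N) = cis (2 * pi * real j / real N)"
    using assms(4) by (simp add: omg_def DeMoivre mult_ac)
  thus ?thesis using inj_onD[OF b] assms by blast
qed

lemma omg_pow_inj: assumes "N > 0" "k < N" shows "omg N ^ k = 1 \<longleftrightarrow> k = 0"
  using omg_inj[OF assms(1,2), of 0] assms(1) by auto

lemma w_eq_1: assumes "N > 0" shows "w N a = 1 \<longleftrightarrow> a mod int N = 0"
proof -
  have lt: "nat (a mod int N) < N" using assms by (simp add: nat_less_iff)
  have ge: "a mod int N \<ge> 0" using assms by simp
  have "w N a = 1 \<longleftrightarrow> nat (a mod int N) = 0" unfolding w_def by (rule omg_pow_inj[OF assms lt])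
  also have "\<dots> \<longleftrightarrow> a mod int N = 0" using ge by linarith
  finally show ?thesis .
qed

lemma w_periodic: "w N (a + int N) = w N a"
  by (simp add: w_def)



lemma dlt_neg: "dlt N (- n) = dlt N n"
  by (simp add: dlt_def dvd_eq_mod_eq_0[symmetric])

lemma sum_dlt: assumes "N > 0"
  shows "(\<Sum>k\<in>{0..<N}. f k * dlt N (int k - m)) = f (nat (m mod int N))"
proof -
  have "(\<Sum>k\<in>{0..<N}. f k * dlt N (int k - m)) = (\<Sum>k\<in>{0..<N}. if k = nat (m mod int N) then f k else 0)"
  proof (rule sum.cong[OF refl])
    fix k assume "k \<in> {0..<N}"
    hence k: "int k < int N" by simp
    have "(int k - m) mod int N = 0 \<longleftrightarrow> int k mod int N = m mod int N"
      by (metis mod_eq_dvd_iff dvd_eq_mod_eq_0)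
    also have "\<dots> \<longleftrightarrow> k = nat (m mod int N)" using k by auto
    finally show "f k * dlt N (int k - m) = (if k = nat (m mod int N) then f k else 0)"
      by (simp add: dlt_def)
  qed
  also have "\<dots> = f (nat (m mod int N))"
    using assms by (simp add: nat_less_iff)
  finally show ?thesis .
qed



lemma sum_shift: assumes N: "N > 0" and per: "\<And>n. f (n mod int N) = f n"
  shows "(\<Sum>k\<in>{0..<N}. f (int k + c)) = (\<Sum>k\<in>{0..<N}. f (int k))"
proof -
  have nn: "int (nat (m mod int N)) = m mod int N" for m using N by simp
  have lt: "nat (m mod int N) \<in> {0..<N}" for m using N by (simp add: nat_less_iff)
  have "(\<Sum>k\<in>{0..<N}. f (int k + c)) = (\<Sum>k\<in>{0..<N}. f (int (nat ((int k + c) mod int N))))"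
    by (rule sum.cong[OF refl]) (simp only: nn per)
  also have "\<dots> = (\<Sum>k\<in>{0..<N}. f (int k))"
  proof (rule sum.reindex_bij_witness[where i = "\<lambda>k. nat ((int k - c) mod int N)" and j = "\<lambda>k. nat ((int k + c) mod int N)"])
    fix a assume a: "a \<in> {0..<N}"
    have "(int (nat ((int a + c) mod int N)) - c) mod int N = ((int a + c) mod int N - c) mod int N"
      by (simp only: nn)
    also have "\<dots> = (int a + c - c) mod int N" by (rule mod_diff_left_eq)
    also have "\<dots> = int a" using a by simp
    finally show "nat ((int (nat ((int a + c) mod int N)) - c) mod int N) = a" by simp
  next
    fix a assume a: "a \<in> {0..<N}"
    have "(int (nat ((int a - c) mod int N)) + c) mod int N = ((int a - c) mod int N + c) mod int N"
      by (simp only: nn)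
    also have "\<dots> = (int a - c + c) mod int N" by (rule mod_add_left_eq)
    also have "\<dots> = int a" using a by simp
    finally show "nat ((int (nat ((int a - c) mod int N)) + c) mod int N) = a" by simp
  next
    fix a show "nat ((int a + c) mod int N) \<in> {0..<N}" by (rule lt)
  next
    fix a show "nat ((int a - c) mod int N) \<in> {0..<N}" by (rule lt)
  qed simp
  finally show ?thesis .
qed



lemma prod_roots_poly: assumes "N > 0"
  shows "(\<Prod>j<N. [:- (omg N ^ j), 1:]) = monom 1 N - 1"
proof (rule poly_eqI_degree_lead_coeff[where n = N and A = "(\<lambda>j. omg N ^ j) ` {..<N}"])
  have "inj_on (\<lambda>j. omg N ^ j) {..<N}" by (auto intro!: inj_onI omg_inj[OF assms])
  thus "card ((\<lambda>j. omg N ^ j) ` {..<N}) \<ge> N" by (simp add: card_image)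
  have dg: "degree (\<Prod>j<N. [:- (omg N ^ j), 1:]) = N"
    by (subst degree_prod_eq_sum_degree) auto
  thus "degree (\<Prod>j<N. [:- (omg N ^ j), 1:]) \<le> N" by simp
  show "degree (monom (1::complex) N - 1) \<le> N"
    by (rule order.trans[OF degree_diff_le_max]) (simp add: degree_monom_le)
  have "lead_coeff (\<Prod>j<N. [:- (omg N ^ j), 1:]) = 1"
    by (simp add: lead_coeff_prod)
  moreover have "degree (\<Prod>j<N. [:- (omg N ^ j), 1:]) = N"
    by (subst degree_prod_eq_sum_degree) auto
  ultimately show "poly.coeff (\<Prod>j<N. [:- (omg N ^ j), 1:]) N = poly.coeff (monom 1 N - 1) N"
    using assms by simp
  fix t assume "t \<in> (\<lambda>j. omg N ^ j) ` {..<N}"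
  then obtain k where k: "k < N" "t = omg N ^ k" by auto
  have "poly (\<Prod>j<N. [:- (omg N ^ j), 1:]) t = 0"
    using k by (auto simp: poly_prod)
  moreover have "t ^ N = 1" using k omg_pow_N[OF assms]
    by (metis mult.commute power_mult power_one)
  ultimately show "poly (\<Prod>j<N. [:- (omg N ^ j), 1:]) t = poly (monom 1 N - 1) t"
    by (simp add: poly_monom)
qed

lemma prod_roots: assumes "N > 0" "x \<noteq> 0"
  shows "(\<Prod>j\<in>{1..N}. z - x * omg N ^ j) = z ^ N - x ^ N"
proof -
  have e: "(\<Prod>j<N. t - omg N ^ j) = t ^ N - 1" for t
    using arg_cong[OF prod_roots_poly[OF assms(1)], of "\<lambda>p. poly p t"]
    by (simp add: poly_prod poly_monom)
  have "(\<Prod>j\<in>{1..N}. z - x * omg N ^ j) = (\<Prod>j<N. z - x * omg N ^ j)"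
  proof -
    have "(\<Prod>j\<in>{1..N}. z - x * omg N ^ j) = (\<Prod>j\<in>{1..<N}. z - x * omg N ^ j) * (z - x * omg N ^ N)"
      using assms by (simp add: atLeastLessThanSuc_atLeastAtMost[symmetric] prod.atLeastLessThan_Suc)
    moreover have "(\<Prod>j<N. z - x * omg N ^ j) = (z - x * omg N ^ 0) * (\<Prod>j\<in>{1..<N}. z - x * omg N ^ j)"
      using assms by (simp add: lessThan_atLeast0 prod.atLeast_Suc_lessThan)
    ultimately show ?thesis using omg_pow_N[OF assms(1)] by simp
  qed
  also have "\<dots> = (\<Prod>j<N. x * (z / x - omg N ^ j))"
    using assms by (intro prod.cong refl) (simp add: field_simps)
  also have "\<dots> = x ^ N * ((z/x) ^ N - 1)" by (simp add: prod.distrib e)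
  also have "\<dots> = z ^ N - x ^ N" using assms by (simp add: field_simps power_divide)
  finally show ?thesis .
qed

lemma qdl_mod: "qdl N x y z (n mod int N) = qdl N x y z n" by (simp add: qdl_def)
lemma qdl_0: "qdl N x y z 0 = 1" by (simp add: qdl_def)
lemma qdl_cong: "a mod int N = b mod int N \<Longrightarrow> qdl N x y z a = qdl N x y z b"
  by (metis qdl_mod)
lemma w_cong: "a mod int N = b mod int N \<Longrightarrow> w N a = w N b"
  by (metis w_mod)

definition Tq :: "nat \<Rightarrow> complex \<Rightarrow> complex \<Rightarrow> complex \<Rightarrow> int \<Rightarrow> int \<Rightarrow> complex" where
  "Tq N x y z d m = qdl N x y z m / qdl N (x / omg N) y z (m + d)"

definition Sq :: "nat \<Rightarrow> complex \<Rightarrow> complex \<Rightarrow> complex \<Rightarrow> int \<Rightarrow> complex" where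
  "Sq N x y z d = (\<Sum>k\<in>{0..<N}. w N (- (int k * d)) * Tq N x y z d (int k))"

lemma sum_omg_pow: assumes N: "N > 0" and e: "e < N"
  shows "(\<Sum>k\<in>{0..<N}. (omg N ^ e) ^ k) = (if e = 0 then of_nat N else 0)"
proof (cases "e = 0")
  case False
  have ne: "omg N ^ e \<noteq> 1" using omg_pow_inj[OF N e] False by simp
  have "(omg N ^ e) ^ N = 1" using omg_pow_N[OF N] by (metis mult.commute power_mult power_one)
  thus ?thesis using False ne by (simp add: geometric_sum atLeast0LessThan)
qed simp

lemma geo_recip: assumes N: "N > 0" and zx: "z ^ N \<noteq> x ^ N"
  shows "(\<Sum>k\<in>{0..<N}. 1 / (z - x * omg N ^ k)) = of_nat N * z ^ (N - 1) / (z ^ N - x ^ N)"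
proof -
  have nz: "z - x * omg N ^ k \<noteq> 0" for k
  proof
    assume "z - x * omg N ^ k = 0"
    hence "z ^ N = x ^ N * (omg N ^ N) ^ k" by (simp add: power_mult_distrib power_mult[symmetric] mult.commute)
    thus False using omg_pow_N[OF N] zx by simp
  qed
  have tN: "(x * omg N ^ k) ^ N = x ^ N" for k
    using omg_pow_N[OF N] by (simp add: power_mult_distrib power_mult[symmetric] mult.commute) (simp add: power_mult)
  have pt: "1 / (z - x * omg N ^ k) = (\<Sum>i<N. (x * omg N ^ k) ^ (N - Suc i) * z ^ i) / (z ^ N - x ^ N)" for k
  proof -
    have "z ^ N - x ^ N = (z - x * omg N ^ k) * (\<Sum>i<N. (x * omg N ^ k) ^ (N - Suc i) * z ^ i)"
      using power_diff_sumr2[of z N "x * omg N ^ k"] tN[of k] by simp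
    thus ?thesis using nz[of k] zx by (simp add: field_simps)
  qed
  have "(\<Sum>k\<in>{0..<N}. 1 / (z - x * omg N ^ k))
      = (\<Sum>k\<in>{0..<N}. \<Sum>i<N. x ^ (N - Suc i) * z ^ i * (omg N ^ (N - Suc i)) ^ k) / (z ^ N - x ^ N)"
    unfolding pt sum_divide_distrib[symmetric]
    by (intro arg_cong[where f = "\<lambda>t. t / (z ^ N - x ^ N)"] sum.cong refl)
       (simp add: power_mult_distrib power_mult[symmetric] mult.commute mult.left_commute)
  also have "(\<Sum>k\<in>{0..<N}. \<Sum>i<N. x ^ (N - Suc i) * z ^ i * (omg N ^ (N - Suc i)) ^ k)
      = (\<Sum>i<N. x ^ (N - Suc i) * z ^ i * (\<Sum>k\<in>{0..<N}. (omg N ^ (N - Suc i)) ^ k))"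
    by (subst sum.swap) (simp add: sum_distrib_left)
  also have "\<dots> = (\<Sum>i<N. if i = N - 1 then of_nat N * z ^ (N - 1) else 0)"
    by (rule sum.cong[OF refl]) (use N in \<open>auto simp: sum_omg_pow\<close>)
  also have "\<dots> = of_nat N * z ^ (N - 1)" using N by simp
  finally show ?thesis .
qed



locale qd = fixes N :: nat and x y z :: complex
  assumes N: "N > 0" and x: "x \<noteq> 0" and y: "y \<noteq> 0" and F: "z ^ N = x ^ N + y ^ N"
begin

lemma den_nz: "z - x * omg N ^ j \<noteq> 0"
proof
  assume "z - x * omg N ^ j = 0"
  hence "z ^ N = x ^ N * (omg N ^ N) ^ j" by (simp add: power_mult_distrib power_mult[symmetric] mult.commute)
  hence "z ^ N = x ^ N" using omg_pow_N[OF N] by simp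
  thus False using F y by simp
qed

lemma qdl_nz: "qdl N x y z n \<noteq> 0"
  unfolding qdl_def using y den_nz by (simp add: prod_zero_iff)

lemma qdl_rec: "y * qdl N x y z (n - 1) = (z - x * w N n) * qdl N x y z n"
proof (cases "n mod int N = 0")
  case False
  define r where "r = n mod int N"
  have r: "0 < r" "r < int N" using False N by (auto simp: r_def order.not_eq_order_implies_strict)
  have r1: "(n - 1) mod int N = r - 1"
  proof -
    have "(n - 1) mod int N = (r - 1) mod int N" unfolding r_def by (rule mod_diff_left_eq[symmetric])
    also have "\<dots> = r - 1" using r by simp
    finally show ?thesis .
  qed
  define m where "m = nat (r - 1)"
  have nr: "nat r = Suc m" using r by (simp add: m_def)
  have wn: "w N n = omg N ^ Suc m" unfolding w_def r_def[symmetric] nr ..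
  have q1: "qdl N x y z (n - 1) = (\<Prod>j = 1..m. y / (z - x * omg N ^ j))"
    unfolding qdl_def r1 m_def ..
  have q2: "qdl N x y z n = (\<Prod>j = 1..m. y / (z - x * omg N ^ j)) * (y / (z - x * omg N ^ Suc m))"
    unfolding qdl_def r_def[symmetric] nr by simp
  show ?thesis unfolding q1 q2 wn using den_nz[of "Suc m"] by (simp add: field_simps)
next
  case True
  have wn: "w N n = 1" using True by (simp add: w_def)
  have qn: "qdl N x y z n = 1" using True by (simp add: qdl_def)
  have r1: "(n - 1) mod int N = int N - 1"
  proof -
    have "(n - 1) mod int N = (n mod int N - 1) mod int N" by (rule mod_diff_left_eq[symmetric])
    also have "\<dots> = int N - 1" using True N by (simp add: zmod_minus1)
    finally show ?thesis .
  qed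
  define Q where "Q = (\<Prod>j = 1..N - 1. z - x * omg N ^ j)"
  have Qnz: "Q \<noteq> 0" unfolding Q_def using den_nz by (simp add: prod_zero_iff)
  have "(\<Prod>j = 1..N. z - x * omg N ^ j) = Q * (z - x * omg N ^ N)"
    unfolding Q_def using N by (cases N) auto
  hence QQ: "Q * (z - x) = y ^ N" using prod_roots[OF N x, of z] omg_pow_N[OF N] F by simp
  have "qdl N x y z (n - 1) = (\<Prod>j = 1..N - 1. y / (z - x * omg N ^ j))"
  proof -
    have "nat (int N - 1) = N - 1" by linarith
    thus ?thesis unfolding qdl_def r1 by simp
  qed
  also have "\<dots> = y ^ (N - 1) / Q" unfolding Q_def by (simp add: prod_dividef)
  finally have "y * qdl N x y z (n - 1) = y ^ Suc (N - 1) / Q" by simp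
  also have "\<dots> = y ^ N / Q" using N by simp
  also have "\<dots> = z - x" using QQ Qnz by (simp add: field_simps)
  finally show ?thesis using wn qn by simp
qed


lemma qB: "qd N (x / omg N) y z"
  using N x y F omg_pow_N[OF N] by unfold_locales (auto simp: power_divide omg_nz)

lemma B_rec: "y * qdl N (x / omg N) y z (n - 1) = (z - x * w N (n - 1)) * qdl N (x / omg N) y z n"
proof -
  have w1: "w N 1 = omg N" using omg_pow_w[OF N, of 1] by simp
  have "x / omg N * w N n = x * w N (n - 1)" using w_diff[OF N, of n 1] w1 omg_nz by (simp add: field_simps)
  thus ?thesis using qd.qdl_rec[OF qB, of n] by simp
qed

lemma B_nz: "qdl N (x / omg N) y z n \<noteq> 0" using qd.qdl_nz[OF qB] .

lemma T_rec: "Tq N x y z d m * (z - x * w N m) = Tq N x y z d (m - 1) * (z - x * w N (m + d - 1))"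
proof -
  define a1 a b b1 where "a1 = qdl N x y z (m - 1)" and "a = qdl N x y z m"
    and "b = qdl N (x / omg N) y z (m + d)" and "b1 = qdl N (x / omg N) y z (m + d - 1)"
  have e1: "y * a1 = (z - x * w N m) * a" unfolding a1_def a_def by (rule qdl_rec)
  have e2: "y * b1 = (z - x * w N (m + d - 1)) * b" unfolding b1_def b_def by (rule B_rec)
  have bnz: "b \<noteq> 0" "b1 \<noteq> 0" unfolding b_def b1_def by (rule B_nz)+
  have "Tq N x y z d m * (z - x * w N m) = y * a1 / b" unfolding Tq_def a_def[symmetric] b_def[symmetric]
    using e1 by simp
  also have "\<dots> = a1 / b1 * (y * b1) / b" using bnz by simp
  also have "\<dots> = a1 / b1 * ((z - x * w N (m + d - 1)) * b) / b" using e2 by simp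
  also have "\<dots> = a1 / b1 * (z - x * w N (m + d - 1))" using bnz by simp
  also have "a1 / b1 = Tq N x y z d (m - 1)" unfolding Tq_def a1_def b1_def by (simp add: algebra_simps)
  finally show ?thesis .
qed

lemma T_per: "Tq N x y z d (m mod int N) = Tq N x y z d m"
proof -
  have "qdl N (x / omg N) y z (m mod int N + d) = qdl N (x / omg N) y z (m + d)"
    by (rule qdl_cong) (simp add: mod_add_left_eq)
  thus ?thesis unfolding Tq_def by (simp add: qdl_mod)
qed

end

context qd begin

lemma T_cong: "a mod int N = b mod int N \<Longrightarrow> Tq N x y z d a = Tq N x y z d b"
  by (metis T_per)

lemma S_vanish: assumes z0: "z \<noteq> 0" and d: "d mod int N \<noteq> 0" shows "Sq N x y z d = 0"
proof -
  define T where "T = Tq N x y z d"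
  define G where "G m = w N (-(m * d)) * (z * T (m - 1) - x * w N (m + d - 1) * T (m - 1))" for m
  have Gper: "G (m mod int N) = G m" for m
  proof -
    have h: "m mod int N mod int N = m mod int N" by simp
    have "w N (-(m mod int N * d)) = w N (-(m * d))"
      by (rule w_cong, rule mod_minus_cong, rule mod_mult_cong[OF h refl])
    moreover have "T (m mod int N - 1) = T (m - 1)"
      unfolding T_def by (rule T_cong, rule mod_diff_cong[OF h refl])
    moreover have "w N (m mod int N + d - 1) = w N (m + d - 1)"
      by (rule w_cong, rule mod_diff_cong[OF mod_add_cong[OF h refl] refl])
    ultimately show ?thesis unfolding G_def by simp
  qed
  have pt1: "z * (w N (-(int k * d)) * T (int k)) - x * (w N (-(int k * d)) * w N (int k) * T (int k)) = G (int k)" for k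
  proof -
    have "T (int k) * (z - x * w N (int k)) = T (int k - 1) * (z - x * w N (int k + d - 1))"
      unfolding T_def by (rule T_rec)
    hence h2: "z * T (int k) - x * w N (int k) * T (int k) = z * T (int k - 1) - x * w N (int k + d - 1) * T (int k - 1)"
      by (simp add: algebra_simps)
    have "w N (-(int k * d)) * (z * T (int k) - x * w N (int k) * T (int k)) = G (int k)"
      unfolding G_def h2 ..
    thus ?thesis by (simp add: algebra_simps)
  qed
  have pt2: "G (int k + 1) = (w N (-d) * z) * (w N (-(int k * d)) * T (int k)) - x * (w N (-(int k * d)) * w N (int k) * T (int k))" for k
  proof -
    have e1: "w N (-((int k + 1) * d)) = w N (-(int k * d)) * w N (-d)"
    proof -
      have eq: "-((int k + 1) * d) = -(int k * d) + -d" by (simp add: algebra_simps)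
      show ?thesis by (simp only: eq w_add[OF N])
    qed
    have e2: "w N (-((int k + 1) * d)) * w N (int k + 1 + d - 1) = w N (-(int k * d)) * w N (int k)"
    proof -
      have "w N (-((int k + 1) * d)) * w N (int k + 1 + d - 1) = w N (-((int k + 1) * d) + (int k + 1 + d - 1))"
        by (simp only: w_add[OF N])
      also have "-((int k + 1) * d) + (int k + 1 + d - 1) = -(int k * d) + int k" by (simp add: algebra_simps)
      also have "w N \<dots> = w N (-(int k * d)) * w N (int k)" by (simp only: w_add[OF N])
      finally show ?thesis .
    qed
    have "G (int k + 1) = w N (-((int k + 1) * d)) * z * T (int k) - x * (w N (-((int k + 1) * d)) * w N (int k + 1 + d - 1)) * T (int k)"
      unfolding G_def by (simp add: algebra_simps)
    also have "\<dots> = (w N (-d) * z) * (w N (-(int k * d)) * T (int k)) - x * (w N (-(int k * d)) * w N (int k) * T (int k))"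
      by (subst e2, subst e1, simp add: algebra_simps)
    finally show ?thesis .
  qed
  define S where "S = (\<Sum>k\<in>{0..<N}. w N (-(int k * d)) * T (int k))"
  define U where "U = (\<Sum>k\<in>{0..<N}. w N (-(int k * d)) * w N (int k) * T (int k))"
  have "z * S - x * U = (\<Sum>k\<in>{0..<N}. G (int k))"
    unfolding S_def U_def pt1[symmetric] by (simp only: sum_subtractf sum_distrib_left)
  also have "\<dots> = (\<Sum>k\<in>{0..<N}. G (int k + 1))" by (rule sum_shift[where f = G, OF N Gper, symmetric])
  also have "\<dots> = (w N (-d) * z) * S - x * U"
    unfolding S_def U_def pt2 by (simp only: sum_subtractf sum_distrib_left)
  finally have "(1 - w N (-d)) * z * S = 0" by (simp add: algebra_simps)
  moreover have "d mod int N < int N" using N by simp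
  hence "w N (-d) \<noteq> 1" using d w_eq_1[OF N, of "-d"] by (simp add: zmod_zminus1_eq_if split: if_splits)
  ultimately have "S = 0" using z0 by simp
  thus ?thesis unfolding S_def T_def Sq_def .
qed

lemma S_zero: assumes z0: "z \<noteq> 0" and d: "d mod int N = 0" shows "Sq N x y z d * qbr N (x / z) = 1"
proof -
  have d': "d mod int N = 0 mod int N" using d by simp
  have Td: "Tq N x y z d m = Tq N x y z 0 m" for m
  proof -
    have "qdl N (x / omg N) y z (m + d) = qdl N (x / omg N) y z (m + 0)"
      by (rule qdl_cong, rule mod_add_cong[OF refl d'])
    thus ?thesis unfolding Tq_def by simp
  qed
  have wd: "w N (-(int k * d)) = 1" for k
  proof -
    have "(-(int k * d)) mod int N = (-(int k * 0)) mod int N"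
      by (rule mod_minus_cong, rule mod_mult_cong[OF refl d'])
    thus ?thesis using w_eq_1[OF N] by simp
  qed
  have V: "Tq N x y z 0 (int k) * (z - x * w N (int k)) = z - x" for k
  proof (induction k)
    case 0 thus ?case by (simp add: Tq_def qdl_0)
  next
    case (Suc k)
    have "Tq N x y z 0 (int (Suc k)) * (z - x * w N (int (Suc k))) = Tq N x y z 0 (int (Suc k) - 1) * (z - x * w N (int (Suc k) + 0 - 1))"
      by (rule T_rec)
    also have "\<dots> = Tq N x y z 0 (int k) * (z - x * w N (int k))" by simp
    finally show ?case using Suc.IH by simp
  qed
  have wk: "w N (int k) = omg N ^ k" for k using omg_pow_w[OF N] by simp
  have Tk: "Tq N x y z 0 (int k) = (z - x) / (z - x * omg N ^ k)" for k
    using V[of k] den_nz[of k] unfolding wk by (simp add: field_simps)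
  have zx: "z ^ N \<noteq> x ^ N" using F y by simp
  have zx1: "z \<noteq> x" using zx by auto
  have "Sq N x y z d = (\<Sum>k\<in>{0..<N}. (z - x) * (1 / (z - x * omg N ^ k)))"
    unfolding Sq_def wd Td Tk by simp
  also have "\<dots> = (z - x) * (of_nat N * z ^ (N - 1) / (z ^ N - x ^ N))"
    by (simp only: sum_distrib_left[symmetric] geo_recip[OF N zx])
  finally have SS: "Sq N x y z d = (z - x) * (of_nat N * z ^ (N - 1) / (z ^ N - x ^ N))" .
  have zN: "z ^ N = z * z ^ (N - 1)" using N by (cases N) auto
  have "qbr N (x / z) = (z ^ N - x ^ N) / (of_nat N * z ^ (N - 1) * (z - x))"
    unfolding qbr_def using z0 N zx1 zN by (simp add: field_simps power_divide)
  thus ?thesis unfolding SS using zx zx1 z0 N by (simp add: field_simps)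
qed

end

lemma mcomp_assoc: assumes "finite J" "finite K"
  shows "mcomp K (mcomp J A B) C = mcomp J A (mcomp K B C)"
proof (intro ext)
  fix x z
  have "mcomp K (mcomp J A B) C x z = (\<Sum>y\<in>K. \<Sum>u\<in>J. A x u * B u y * C y z)"
    unfolding mcomp_def by (simp add: sum_distrib_right)
  also have "\<dots> = (\<Sum>u\<in>J. \<Sum>y\<in>K. A x u * B u y * C y z)" by (rule sum.swap)
  also have "\<dots> = mcomp J A (mcomp K B C) x z"
    unfolding mcomp_def by (simp add: sum_distrib_left mult.assoc)
  finally show "mcomp K (mcomp J A B) C x z = mcomp J A (mcomp K B C) x z" .
qed

lemma mcomp_cong_right: "meq J K B B' \<Longrightarrow> z \<in> K \<Longrightarrow> mcomp J A B x z = mcomp J A B' x z"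
  unfolding mcomp_def meq_def by (rule sum.cong) auto

lemma mcomp_cong_left: "meq I J A A' \<Longrightarrow> x \<in> I \<Longrightarrow> mcomp J A B x z = mcomp J A' B x z"
  unfolding mcomp_def meq_def by (rule sum.cong) auto

lemma comm_comp:
  assumes fin: "finite I" "finite J" "finite K"
    and h1: "meq J I (mcomp J GS T) (mcomp I T GR)"
    and h2: "meq K J (mcomp K GU T') (mcomp J T' GS)"
  shows "meq K I (mcomp K GU (mcomp J T' T)) (mcomp I (mcomp J T' T) GR)"
  unfolding meq_def
proof (intro ballI)
  fix x z assume x: "x \<in> K" and z: "z \<in> I"
  have "mcomp K GU (mcomp J T' T) x z = mcomp J (mcomp K GU T') T x z"
    using mcomp_assoc[OF fin(3,2), where A = GU and B = T' and C = T] by simp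
  also have "\<dots> = mcomp J (mcomp J T' GS) T x z" by (rule mcomp_cong_left[OF h2 x])
  also have "\<dots> = mcomp J T' (mcomp J GS T) x z" using mcomp_assoc[OF fin(2,2), where A = T' and B = GS and C = T] by simp
  also have "\<dots> = mcomp J T' (mcomp I T GR) x z" by (rule mcomp_cong_right[OF h1 z])
  also have "\<dots> = mcomp I (mcomp J T' T) GR x z" using mcomp_assoc[OF fin(2,1), where A = T' and B = T and C = GR] by simp
  finally show "mcomp K GU (mcomp J T' T) x z = mcomp I (mcomp J T' T) GR x z" .
qed

lemma hom_comp:
  assumes "finite I" "finite J" "finite K" "is_hom I R J S T" "is_hom J S K U T'"
  shows "is_hom I R K U (mcomp J T' T)"
  using assms unfolding is_hom_def by (auto intro: comm_comp)

lemma dlt_swap: "dlt N (a - b) = dlt N (b - a)"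
  using dlt_neg[of N "b - a"] by simp

lemma schur:
  assumes N: "N > 0" and a: "a \<noteq> 0" and b: "b \<noteq> 0"
    and h: "is_hom (Vidx N) (stdrep N a b) (Vidx N) (stdrep N a b) M"
  shows "meq (Vidx N) (Vidx N) M (\<lambda>i j. M 0 0 * mid i j)"
proof -
  have hE: "mcomp (Vidx N) (rE (stdrep N a b)) M i j = mcomp (Vidx N) M (rE (stdrep N a b)) i j"
    and hD: "mcomp (Vidx N) (rD (stdrep N a b)) M i j = mcomp (Vidx N) M (rD (stdrep N a b)) i j"
    if "i < N" "j < N" for i j
    using h that unfolding is_hom_def meq_def Vidx_def by auto
  have E1: "mcomp (Vidx N) (rE (stdrep N a b)) M i j = a ^ 2 * omg N ^ i * M i j" if "i < N" for i j
  proof -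
    have "mcomp (Vidx N) (rE (stdrep N a b)) M i j = (\<Sum>k\<in>{0..<N}. (a ^ 2 * omg N ^ i * M k j) * dlt N (int k - int i))"
      unfolding mcomp_def Vidx_def
    proof (intro sum.cong refl)
      fix k
      have "dlt N (int i - int k) = dlt N (int k - int i)" by (rule dlt_swap)
      thus "rE (stdrep N a b) i k * M k j = a ^ 2 * omg N ^ i * M k j * dlt N (int k - int i)"
        unfolding stdrep_def by simp
    qed
    also have "\<dots> = a ^ 2 * omg N ^ i * M i j" using sum_dlt[OF N, where f = "\<lambda>k. a ^ 2 * omg N ^ i * M k j" and m = "int i"] that by simp
    finally show ?thesis .
  qed
  have E2: "mcomp (Vidx N) M (rE (stdrep N a b)) i j = a ^ 2 * omg N ^ j * M i j" if "j < N" for i j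
  proof -
    have "mcomp (Vidx N) M (rE (stdrep N a b)) i j = (\<Sum>k\<in>{0..<N}. (a ^ 2 * omg N ^ k * M i k) * dlt N (int k - int j))"
      unfolding mcomp_def Vidx_def stdrep_def by (intro sum.cong refl) (simp add: algebra_simps)
    also have "\<dots> = a ^ 2 * omg N ^ j * M i j" using sum_dlt[OF N, where f = "\<lambda>k. a ^ 2 * omg N ^ k * M i k" and m = "int j"] that by simp
    finally show ?thesis .
  qed
  have D1: "mcomp (Vidx N) (rD (stdrep N a b)) M i j = a * b * M (nat ((int i - 1) mod int N)) j" for i j
  proof -
    have "mcomp (Vidx N) (rD (stdrep N a b)) M i j = (\<Sum>k\<in>{0..<N}. (a * b * M k j) * dlt N (int k - (int i - 1)))"
      unfolding mcomp_def Vidx_def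
    proof (intro sum.cong refl)
      fix k
      have eq: "int i - int k - 1 = -(int k - (int i - 1))" by simp
      have "dlt N (int i - int k - 1) = dlt N (int k - (int i - 1))" by (simp only: eq dlt_neg)
      thus "rD (stdrep N a b) i k * M k j = a * b * M k j * dlt N (int k - (int i - 1))"
        unfolding stdrep_def by simp
    qed
    also have "\<dots> = a * b * M (nat ((int i - 1) mod int N)) j" by (rule sum_dlt[OF N])
    finally show ?thesis .
  qed
  have D2: "mcomp (Vidx N) M (rD (stdrep N a b)) i j = a * b * M i (nat ((int j + 1) mod int N))" for i j
  proof -
    have "mcomp (Vidx N) M (rD (stdrep N a b)) i j = (\<Sum>k\<in>{0..<N}. (a * b * M i k) * dlt N (int k - (int j + 1)))"
      unfolding mcomp_def Vidx_def stdrep_def by (intro sum.cong refl) (simp add: algebra_simps)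
    also have "\<dots> = a * b * M i (nat ((int j + 1) mod int N))" by (rule sum_dlt[OF N])
    finally show ?thesis .
  qed
  have off: "M i j = 0" if "i < N" "j < N" "i \<noteq> j" for i j
  proof -
    have "a ^ 2 * omg N ^ i * M i j = a ^ 2 * omg N ^ j * M i j" using hE[OF that(1,2)] E1[OF that(1)] E2[OF that(2)] by simp
    hence "(omg N ^ i - omg N ^ j) * M i j = 0" using a by (simp add: algebra_simps)
    moreover have "omg N ^ i \<noteq> omg N ^ j" using omg_inj[OF N that(1,2)] that(3) by blast
    ultimately show ?thesis by simp
  qed
  have step: "M j j = M (Suc j) (Suc j)" if "Suc j < N" for j
  proof -
    have "a * b * M (nat ((int (Suc j) - 1) mod int N)) j = a * b * M (Suc j) (nat ((int j + 1) mod int N))"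
      using hD[of "Suc j" j] that D1 D2 by simp
    moreover have "nat ((int (Suc j) - 1) mod int N) = j" using that by simp
    moreover have "nat ((int j + 1) mod int N) = Suc j"
    proof -
      have "int j + 1 < int N" "0 \<le> int j + 1" using that by simp_all
      hence "(int j + 1) mod int N = int j + 1" by (rule mod_pos_pos_trivial[rotated])
      thus ?thesis by simp
    qed
    ultimately show ?thesis using a b by simp
  qed
  have diag: "j < N \<Longrightarrow> M j j = M 0 0" for j
  proof (induction j)
    case (Suc j)
    hence "M j j = M 0 0" by simp
    thus ?case using step[OF Suc.prems] by simp
  qed simp
  show ?thesis unfolding meq_def Vidx_def
  proof (intro ballI)
    fix i j assume "i \<in> {0..<N}" "j \<in> {0..<N}"
    hence ij: "i < N" "j < N" by auto
    show "M i j = M 0 0 * mid i j"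
    proof (cases "i = j")
      case True thus ?thesis using diag[OF ij(1)] by (simp add: mid_def)
    next
      case False thus ?thesis using off[OF ij False] by (simp add: mid_def)
    qed
  qed
qed


lemma dlt_small: assumes "a < N" "b < N" shows "dlt N (int a - int b) = (if a = b then 1 else 0)"
proof -
  have "(int a - int b) mod int N = 0 \<longleftrightarrow> int a mod int N = int b mod int N"
    by (metis mod_eq_dvd_iff dvd_eq_mod_eq_0)
  also have "\<dots> \<longleftrightarrow> a = b" using assms by simp
  finally show ?thesis by (simp add: dlt_def)
qed

lemma mif: "c * (if P then 1 else 0) = (if P then c else (0::complex))" "(if P then 1 else 0) * c = (if P then c else (0::complex))" by simp_all

lemma sum_mid_left: "finite J \<Longrightarrow> x \<in> J \<Longrightarrow> (\<Sum>y\<in>J. mid x y * f y) = f x"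
  by (simp add: mid_def mif)

lemma sum_mid_right: "finite J \<Longrightarrow> z \<in> J \<Longrightarrow> (\<Sum>y\<in>J. f y * mid y z) = f z"
  by (simp add: mid_def mif)

lemma sum_delta_small: "b < (N::nat) \<Longrightarrow> (\<Sum>a<N. c a * (if b = a then 1 else 0)) = (c b :: complex)"
  by (simp add: mif)

lemma basis_dual:
  fixes K :: "nat \<Rightarrow> ('b, 'a) mat" and Kb :: "nat \<Rightarrow> ('a, 'b) mat"
  assumes finI: "finite I" and finJ: "finite J" and x0: "x0 \<in> I"
    and homK: "\<And>\<alpha>. \<alpha> < N \<Longrightarrow> is_hom I R J S (K \<alpha>)"
    and homKb: "\<And>\<alpha>. \<alpha> < N \<Longrightarrow> is_hom J S I R (Kb \<alpha>)"
    and dual: "\<And>\<alpha> \<beta>. \<alpha> < N \<Longrightarrow> \<beta> < N \<Longrightarrow>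
        meq I I (mcomp J (Kb \<alpha>) (K \<beta>)) (\<lambda>x y. dlt N (int \<alpha> - int \<beta>) * mid x y)"
    and compl: "meq J J (\<lambda>x y. \<Sum>\<alpha><N. mcomp I (K \<alpha>) (Kb \<alpha>) x y) mid"
    and schur: "\<And>M. is_hom I R I R M \<Longrightarrow> meq I I M (\<lambda>x y. M x0 x0 * mid x y)"
  shows "is_hom_basis N I R J S K \<and> is_hom_basis N J S I R Kb"
proof -
  have dualx: "mcomp J (Kb \<alpha>) (K \<beta>) x0 x0 = (if \<alpha> = \<beta> then 1 else 0)" if "\<alpha> < N" "\<beta> < N" for \<alpha> \<beta>
    using dual[OF that] x0 dlt_small[OF that] unfolding meq_def by (simp add: mid_def)
  have swap: "(\<Sum>y\<in>J. (\<Sum>\<alpha><N. F \<alpha> y) * G y) = (\<Sum>\<alpha><N. \<Sum>y\<in>J. F \<alpha> y * G y)" for F :: "nat \<Rightarrow> 'b \<Rightarrow> complex" and G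
    by (simp add: sum_distrib_right sum.swap[of _ J])
  have swap2: "(\<Sum>y\<in>J. G y * (\<Sum>\<alpha><N. F \<alpha> y)) = (\<Sum>\<alpha><N. \<Sum>y\<in>J. G y * F \<alpha> y)" for F :: "nat \<Rightarrow> 'b \<Rightarrow> complex" and G
    by (simp add: sum_distrib_left sum.swap[of _ J])
  have indK: "\<forall>\<beta><N. c \<beta> = 0" if h: "meq J I (\<lambda>x y. \<Sum>\<alpha><N. c \<alpha> * K \<alpha> x y) (\<lambda>_ _. 0)" for c
  proof (intro allI impI)
    fix \<beta> assume b: "\<beta> < N"
    have "0 = mcomp J (Kb \<beta>) (\<lambda>_ _. 0) x0 x0" by (simp add: mcomp_def)
    also have "\<dots> = mcomp J (Kb \<beta>) (\<lambda>x y. \<Sum>\<alpha><N. c \<alpha> * K \<alpha> x y) x0 x0"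
      by (rule mcomp_cong_right[OF h x0, symmetric])
    also have "\<dots> = (\<Sum>\<alpha><N. c \<alpha> * mcomp J (Kb \<beta>) (K \<alpha>) x0 x0)"
      unfolding mcomp_def by (simp add: sum_distrib_left mult.left_commute sum.swap[of _ J])
    also have "\<dots> = (\<Sum>\<alpha><N. c \<alpha> * (if \<beta> = \<alpha> then 1 else 0))"
      by (rule sum.cong[OF refl]) (simp add: dualx b)
    also have "\<dots> = c \<beta>" by (rule sum_delta_small[OF b])
    finally show "c \<beta> = 0" by simp
  qed
  have indKb: "\<forall>\<beta><N. c \<beta> = 0" if h: "meq I J (\<lambda>x y. \<Sum>\<alpha><N. c \<alpha> * Kb \<alpha> x y) (\<lambda>_ _. 0)" for c
  proof (intro allI impI)
    fix \<beta> assume b: "\<beta> < N"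
    have "0 = mcomp J (\<lambda>_ _. 0) (K \<beta>) x0 x0" by (simp add: mcomp_def)
    also have "\<dots> = mcomp J (\<lambda>x y. \<Sum>\<alpha><N. c \<alpha> * Kb \<alpha> x y) (K \<beta>) x0 x0"
      by (rule mcomp_cong_left[OF h x0, symmetric])
    also have "\<dots> = (\<Sum>\<alpha><N. c \<alpha> * mcomp J (Kb \<alpha>) (K \<beta>) x0 x0)"
      unfolding mcomp_def by (simp add: swap sum_distrib_left mult.assoc)
    also have "\<dots> = (\<Sum>\<alpha><N. c \<alpha> * (if \<beta> = \<alpha> then 1 else 0))"
      by (rule sum.cong[OF refl]) (auto simp: dualx b)
    also have "\<dots> = c \<beta>" by (rule sum_delta_small[OF b])
    finally show "c \<beta> = 0" by simp
  qed
  have spK: "\<exists>c. meq J I T (\<lambda>x y. \<Sum>\<alpha><N. c \<alpha> * K \<alpha> x y)" if hT: "is_hom I R J S T" for T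
  proof -
    define c where "c \<alpha> = mcomp J (Kb \<alpha>) T x0 x0" for \<alpha>
    have sc: "meq I I (mcomp J (Kb \<alpha>) T) (\<lambda>x y. c \<alpha> * mid x y)" if "\<alpha> < N" for \<alpha>
      unfolding c_def by (rule schur, rule hom_comp[OF finI finJ finI hT homKb[OF that]])
    show ?thesis
    proof (rule exI[of _ c], unfold meq_def, intro ballI)
      fix x z assume x: "x \<in> J" and z: "z \<in> I"
      have "T x z = (\<Sum>y\<in>J. mid x y * T y z)" using sum_mid_left[OF finJ x] by simp
      also have "\<dots> = (\<Sum>y\<in>J. (\<Sum>\<alpha><N. mcomp I (K \<alpha>) (Kb \<alpha>) x y) * T y z)"
        using compl x unfolding meq_def by (intro sum.cong refl) simp
      also have "\<dots> = (\<Sum>\<alpha><N. mcomp J (mcomp I (K \<alpha>) (Kb \<alpha>)) T x z)"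
        unfolding swap by (simp add: mcomp_def)
      also have "\<dots> = (\<Sum>\<alpha><N. mcomp I (K \<alpha>) (mcomp J (Kb \<alpha>) T) x z)"
        by (simp add: mcomp_assoc[OF finI finJ])
      also have "\<dots> = (\<Sum>\<alpha><N. mcomp I (K \<alpha>) (\<lambda>x y. c \<alpha> * mid x y) x z)"
        by (rule sum.cong[OF refl], rule mcomp_cong_right[OF sc z], simp)
      also have "\<dots> = (\<Sum>\<alpha><N. c \<alpha> * K \<alpha> x z)"
        unfolding mcomp_def by (rule sum.cong[OF refl]) (simp add: mult.left_commute sum_distrib_left[symmetric] sum_mid_right[OF finI z])
      finally show "T x z = (\<Sum>\<alpha><N. c \<alpha> * K \<alpha> x z)" .
    qed
  qed
  have spKb: "\<exists>c. meq I J T (\<lambda>x y. \<Sum>\<alpha><N. c \<alpha> * Kb \<alpha> x y)" if hT: "is_hom J S I R T" for T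
  proof -
    define c where "c \<alpha> = mcomp J T (K \<alpha>) x0 x0" for \<alpha>
    have sc: "meq I I (mcomp J T (K \<alpha>)) (\<lambda>x y. c \<alpha> * mid x y)" if "\<alpha> < N" for \<alpha>
      unfolding c_def by (rule schur, rule hom_comp[OF finI finJ finI homK[OF that] hT])
    show ?thesis
    proof (rule exI[of _ c], unfold meq_def, intro ballI)
      fix x z assume x: "x \<in> I" and z: "z \<in> J"
      have "T x z = (\<Sum>y\<in>J. T x y * mid y z)" using sum_mid_right[OF finJ z] by simp
      also have "\<dots> = (\<Sum>y\<in>J. T x y * (\<Sum>\<alpha><N. mcomp I (K \<alpha>) (Kb \<alpha>) y z))"
        using compl z unfolding meq_def by (intro sum.cong refl) simp
      also have "\<dots> = (\<Sum>\<alpha><N. mcomp J T (mcomp I (K \<alpha>) (Kb \<alpha>)) x z)"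
        unfolding swap2 by (simp add: mcomp_def)
      also have "\<dots> = (\<Sum>\<alpha><N. mcomp I (mcomp J T (K \<alpha>)) (Kb \<alpha>) x z)"
        by (simp add: mcomp_assoc[OF finJ finI])
      also have "\<dots> = (\<Sum>\<alpha><N. mcomp I (\<lambda>x y. c \<alpha> * mid x y) (Kb \<alpha>) x z)"
        by (rule sum.cong[OF refl], rule mcomp_cong_left[OF sc x], simp)
      also have "\<dots> = (\<Sum>\<alpha><N. c \<alpha> * Kb \<alpha> x z)"
        unfolding mcomp_def by (rule sum.cong[OF refl]) (simp add: mult.assoc sum_distrib_left[symmetric] sum_mid_left[OF finI x])
      finally show "T x z = (\<Sum>\<alpha><N. c \<alpha> * Kb \<alpha> x z)" .
    qed
  qed
  show ?thesis unfolding is_hom_basis_def using homK homKb indK indKb spK spKb by blast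
qed

lemma dlt_cong: "a mod int N = b mod int N \<Longrightarrow> dlt N a = dlt N b"
  by (simp add: dlt_def)

lemma dlt_shift: "dlt N (a + int N * s) = dlt N a"
  by (simp add: dlt_def)

lemma mod_expand: "(m::int) mod n = m - n * (m div n)"
  by (simp add: minus_mult_div_eq_mod)

lemma dlt_sum_left: assumes N: "N > 0"
  shows "(\<Sum>k\<in>{0..<N}. dlt N (int i - int k + c) * f k) = f (nat ((int i + c) mod int N))"
proof -
  have "(\<Sum>k\<in>{0..<N}. dlt N (int i - int k + c) * f k) = (\<Sum>k\<in>{0..<N}. f k * dlt N (int k - (int i + c)))"
  proof (intro sum.cong refl)
    fix k
    have e: "int i - int k + c = - (int k - (int i + c))" by simp
    show "dlt N (int i - int k + c) * f k = f k * dlt N (int k - (int i + c))"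
      by (simp only: e dlt_neg mult.commute)
  qed
  also have "\<dots> = f (nat ((int i + c) mod int N))" by (rule sum_dlt[OF N])
  finally show ?thesis .
qed

lemma dlt_sum_right: assumes N: "N > 0"
  shows "(\<Sum>k\<in>{0..<N}. f k * dlt N (int k - int j + c)) = f (nat ((int j - c) mod int N))"
proof -
  have "(\<Sum>k\<in>{0..<N}. f k * dlt N (int k - int j + c)) = (\<Sum>k\<in>{0..<N}. f k * dlt N (int k - (int j - c)))"
    by (intro sum.cong refl) (simp add: algebra_simps)
  also have "\<dots> = f (nat ((int j - c) mod int N))" by (rule sum_dlt[OF N])
  finally show ?thesis .
qed

lemma nat_mod_small: "i < N \<Longrightarrow> nat (int i mod int N) = i" by simp

context fixes N :: nat and a b :: complex assumes N: "N > 0"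
begin

lemma E_left: "i < N \<Longrightarrow> (\<Sum>k\<in>{0..<N}. rE (stdrep N a b) i k * f k) = a ^ 2 * omg N ^ i * f i"
  using dlt_sum_left[OF N, of i 0 "\<lambda>k. a ^ 2 * omg N ^ i * f k"]
  by (simp add: stdrep_def mult.assoc mult.left_commute)

lemma Ei_left: "i < N \<Longrightarrow> (\<Sum>k\<in>{0..<N}. rEi (stdrep N a b) i k * f k) = inverse a ^ 2 * inverse (omg N) ^ i * f i"
  using dlt_sum_left[OF N, of i 0 "\<lambda>k. inverse a ^ 2 * inverse (omg N) ^ i * f k"]
  by (simp add: stdrep_def mult.assoc mult.left_commute)

lemma D_left: "(\<Sum>k\<in>{0..<N}. rD (stdrep N a b) i k * f k) = a * b * f (nat ((int i - 1) mod int N))"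
  using dlt_sum_left[OF N, of i "-1" "\<lambda>k. a * b * f k"]
  by (simp add: stdrep_def mult.assoc mult.left_commute)

lemma E_right: "j < N \<Longrightarrow> (\<Sum>k\<in>{0..<N}. f k * rE (stdrep N a b) k j) = f j * (a ^ 2 * omg N ^ j)"
proof -
  assume j: "j < N"
  have "(\<Sum>k\<in>{0..<N}. f k * rE (stdrep N a b) k j) = (\<Sum>k\<in>{0..<N}. (f k * (a ^ 2 * omg N ^ k)) * dlt N (int k - int j + 0))"
    by (intro sum.cong refl) (simp add: stdrep_def mult.assoc)
  also have "\<dots> = f j * (a ^ 2 * omg N ^ j)" using dlt_sum_right[OF N, of "\<lambda>k. f k * (a ^ 2 * omg N ^ k)" j 0] j by simp
  finally show ?thesis .
qed

lemma Ei_right: "j < N \<Longrightarrow> (\<Sum>k\<in>{0..<N}. f k * rEi (stdrep N a b) k j) = f j * (inverse a ^ 2 * inverse (omg N) ^ j)"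
proof -
  assume j: "j < N"
  have "(\<Sum>k\<in>{0..<N}. f k * rEi (stdrep N a b) k j) = (\<Sum>k\<in>{0..<N}. (f k * (inverse a ^ 2 * inverse (omg N) ^ k)) * dlt N (int k - int j + 0))"
    by (intro sum.cong refl) (simp add: stdrep_def mult.assoc)
  also have "\<dots> = f j * (inverse a ^ 2 * inverse (omg N) ^ j)" using dlt_sum_right[OF N, of "\<lambda>k. f k * (inverse a ^ 2 * inverse (omg N) ^ k)" j 0] j by simp
  finally show ?thesis .
qed

lemma D_right: "(\<Sum>k\<in>{0..<N}. f k * rD (stdrep N a b) k j) = f (nat ((int j + 1) mod int N)) * (a * b)"
proof -
  have "(\<Sum>k\<in>{0..<N}. f k * rD (stdrep N a b) k j) = (\<Sum>k\<in>{0..<N}. (f k * (a * b)) * dlt N (int k - int j + (-1)))"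
    by (intro sum.cong refl) (simp add: stdrep_def mult.assoc)
  also have "\<dots> = f (nat ((int j + 1) mod int N)) * (a * b)" using dlt_sum_right[OF N, of "\<lambda>k. f k * (a * b)" j "-1"] by simp
  finally show ?thesis .
qed

end

lemma mid_left: "i < (N::nat) \<Longrightarrow> (\<Sum>k\<in>{0..<N}. mid i k * f k) = (f i :: complex)"
  by (simp add: mid_def mif)

lemma mid_right: "j < (N::nat) \<Longrightarrow> (\<Sum>k\<in>{0..<N}. f k * mid k j) = (f j :: complex)"
  by (simp add: mid_def mif)

lemma sum_pair: "(\<Sum>p\<in>A \<times> B. g p) = (\<Sum>a\<in>A. \<Sum>b\<in>B. g (a, b))"
  by (simp add: sum.cartesian_product)


context fixes N :: nat and a1 b1 a2 b2 :: complex assumes N: "N > 0"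
begin

abbreviation "TT \<equiv> tensrep (stdrep N a1 b1) (stdrep N a2 b2)"

lemma TE_left: assumes "i < N" "j < N"
  shows "mcomp (Vidx N \<times> Vidx N) (rE TT) M (i, j) q = a1 ^ 2 * omg N ^ i * (a2 ^ 2 * omg N ^ j * M (i, j) q)"
proof -
  have "mcomp (Vidx N \<times> Vidx N) (rE TT) M (i, j) q
      = (\<Sum>i'\<in>{0..<N}. rE (stdrep N a1 b1) i i' * (\<Sum>j'\<in>{0..<N}. rE (stdrep N a2 b2) j j' * M (i', j') q))"
    unfolding mcomp_def Vidx_def sum_pair by (simp add: tensrep_def tens_def sum_distrib_left mult.assoc)
  also have "\<dots> = (\<Sum>i'\<in>{0..<N}. rE (stdrep N a1 b1) i i' * (a2 ^ 2 * omg N ^ j * M (i', j) q))"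
    using E_left[OF N assms(2)] by simp
  also have "\<dots> = a1 ^ 2 * omg N ^ i * (a2 ^ 2 * omg N ^ j * M (i, j) q)"
    by (rule E_left[OF N assms(1)])
  finally show ?thesis .
qed

lemma TEi_left: assumes "i < N" "j < N"
  shows "mcomp (Vidx N \<times> Vidx N) (rEi TT) M (i, j) q = inverse a1 ^ 2 * inverse (omg N) ^ i * (inverse a2 ^ 2 * inverse (omg N) ^ j * M (i, j) q)"
proof -
  have "mcomp (Vidx N \<times> Vidx N) (rEi TT) M (i, j) q
      = (\<Sum>i'\<in>{0..<N}. rEi (stdrep N a1 b1) i i' * (\<Sum>j'\<in>{0..<N}. rEi (stdrep N a2 b2) j j' * M (i', j') q))"
    unfolding mcomp_def Vidx_def sum_pair by (simp add: tensrep_def tens_def sum_distrib_left mult.assoc)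
  also have "\<dots> = (\<Sum>i'\<in>{0..<N}. rEi (stdrep N a1 b1) i i' * (inverse a2 ^ 2 * inverse (omg N) ^ j * M (i', j) q))"
    using Ei_left[OF N assms(2)] by simp
  also have "\<dots> = inverse a1 ^ 2 * inverse (omg N) ^ i * (inverse a2 ^ 2 * inverse (omg N) ^ j * M (i, j) q)"
    by (rule Ei_left[OF N assms(1)])
  finally show ?thesis .
qed

lemma TD_left: assumes "i < N" "j < N"
  shows "mcomp (Vidx N \<times> Vidx N) (rD TT) M (i, j) q
    = a1 ^ 2 * omg N ^ i * (a2 * b2 * M (i, nat ((int j - 1) mod int N)) q)
      + a1 * b1 * M (nat ((int i - 1) mod int N), j) q"
proof -
  have "mcomp (Vidx N \<times> Vidx N) (rD TT) M (i, j) q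
      = (\<Sum>i'\<in>{0..<N}. rE (stdrep N a1 b1) i i' * (\<Sum>j'\<in>{0..<N}. rD (stdrep N a2 b2) j j' * M (i', j') q))
      + (\<Sum>i'\<in>{0..<N}. rD (stdrep N a1 b1) i i' * (\<Sum>j'\<in>{0..<N}. mid j j' * M (i', j') q))"
    unfolding mcomp_def Vidx_def sum_pair
    by (simp add: tensrep_def tens_def sum_distrib_left distrib_right sum.distrib mult.assoc)
  also have "\<dots> = (\<Sum>i'\<in>{0..<N}. rE (stdrep N a1 b1) i i' * (a2 * b2 * M (i', nat ((int j - 1) mod int N)) q))
      + (\<Sum>i'\<in>{0..<N}. rD (stdrep N a1 b1) i i' * M (i', j) q)"
    using D_left[OF N] mid_left[OF assms(2)] by simp
  also have "\<dots> = a1 ^ 2 * omg N ^ i * (a2 * b2 * M (i, nat ((int j - 1) mod int N)) q)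
      + a1 * b1 * M (nat ((int i - 1) mod int N), j) q"
    using E_left[OF N assms(1)] D_left[OF N] by simp
  finally show ?thesis .
qed

lemma TE_right: assumes "i < N" "j < N"
  shows "mcomp (Vidx N \<times> Vidx N) M (rE TT) q (i, j) = M q (i, j) * (a2 ^ 2 * omg N ^ j) * (a1 ^ 2 * omg N ^ i)"
proof -
  have "mcomp (Vidx N \<times> Vidx N) M (rE TT) q (i, j)
      = (\<Sum>i'\<in>{0..<N}. (\<Sum>j'\<in>{0..<N}. M q (i', j') * rE (stdrep N a2 b2) j' j) * rE (stdrep N a1 b1) i' i)"
    unfolding mcomp_def Vidx_def sum_pair by (simp add: tensrep_def tens_def sum_distrib_left sum_distrib_right mult_ac)
  also have "\<dots> = (\<Sum>i'\<in>{0..<N}. (M q (i', j) * (a2 ^ 2 * omg N ^ j)) * rE (stdrep N a1 b1) i' i)"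
    using E_right[OF N assms(2)] by simp
  also have "\<dots> = M q (i, j) * (a2 ^ 2 * omg N ^ j) * (a1 ^ 2 * omg N ^ i)"
    by (rule E_right[OF N assms(1)])
  finally show ?thesis .
qed

lemma TEi_right: assumes "i < N" "j < N"
  shows "mcomp (Vidx N \<times> Vidx N) M (rEi TT) q (i, j) = M q (i, j) * (inverse a2 ^ 2 * inverse (omg N) ^ j) * (inverse a1 ^ 2 * inverse (omg N) ^ i)"
proof -
  have "mcomp (Vidx N \<times> Vidx N) M (rEi TT) q (i, j)
      = (\<Sum>i'\<in>{0..<N}. (\<Sum>j'\<in>{0..<N}. M q (i', j') * rEi (stdrep N a2 b2) j' j) * rEi (stdrep N a1 b1) i' i)"
    unfolding mcomp_def Vidx_def sum_pair by (simp add: tensrep_def tens_def sum_distrib_left sum_distrib_right mult_ac)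
  also have "\<dots> = (\<Sum>i'\<in>{0..<N}. (M q (i', j) * (inverse a2 ^ 2 * inverse (omg N) ^ j)) * rEi (stdrep N a1 b1) i' i)"
    using Ei_right[OF N assms(2)] by simp
  also have "\<dots> = M q (i, j) * (inverse a2 ^ 2 * inverse (omg N) ^ j) * (inverse a1 ^ 2 * inverse (omg N) ^ i)"
    by (rule Ei_right[OF N assms(1)])
  finally show ?thesis .
qed

lemma TD_right: assumes "i < N" "j < N"
  shows "mcomp (Vidx N \<times> Vidx N) M (rD TT) q (i, j)
    = M q (i, nat ((int j + 1) mod int N)) * (a2 * b2) * (a1 ^ 2 * omg N ^ i)
      + M q (nat ((int i + 1) mod int N), j) * (a1 * b1)"
proof -
  have "mcomp (Vidx N \<times> Vidx N) M (rD TT) q (i, j)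
      = (\<Sum>i'\<in>{0..<N}. (\<Sum>j'\<in>{0..<N}. M q (i', j') * rD (stdrep N a2 b2) j' j) * rE (stdrep N a1 b1) i' i)
      + (\<Sum>i'\<in>{0..<N}. (\<Sum>j'\<in>{0..<N}. M q (i', j') * mid j' j) * rD (stdrep N a1 b1) i' i)"
    unfolding mcomp_def Vidx_def sum_pair
    by (simp add: tensrep_def tens_def sum_distrib_left sum_distrib_right distrib_left sum.distrib mult_ac)
  also have "\<dots> = (\<Sum>i'\<in>{0..<N}. (M q (i', nat ((int j + 1) mod int N)) * (a2 * b2)) * rE (stdrep N a1 b1) i' i)
      + (\<Sum>i'\<in>{0..<N}. M q (i', j) * rD (stdrep N a1 b1) i' i)"
    using D_right[OF N] mid_right[OF assms(2)] by simp
  also have "\<dots> = M q (i, nat ((int j + 1) mod int N)) * (a2 * b2) * (a1 ^ 2 * omg N ^ i)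
      + M q (nat ((int i + 1) mod int N), j) * (a1 * b1)"
    using E_right[OF N assms(1)] D_right[OF N] by simp
  finally show ?thesis .
qed

end

definition KF :: "nat \<Rightarrow> (int \<Rightarrow> int \<Rightarrow> complex) \<Rightarrow> (nat \<times> nat, nat) mat" where
  "KF N F = (\<lambda>p k. F (int (fst p)) (int (snd p)) * dlt N (int (fst p) + int (snd p) - int k))"

definition KbF :: "nat \<Rightarrow> (int \<Rightarrow> int \<Rightarrow> complex) \<Rightarrow> (nat, nat \<times> nat) mat" where
  "KbF N G = (\<lambda>k p. G (int (fst p)) (int (snd p)) * dlt N (int (fst p) + int (snd p) - int k))"

lemma dlt_nz_cong: "dlt N (a - b) \<noteq> 0 \<Longrightarrow> a mod int N = b mod int N"
  unfolding dlt_def by (metis mod_eq_dvd_iff dvd_eq_mod_eq_0)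

lemma dlt_modA: "dlt N (a + b mod int N - c) = dlt N (a + b - c)"
proof (rule dlt_cong)
  have "(a + b mod int N - c) mod int N = ((a + b mod int N) mod int N - c) mod int N" by (rule mod_diff_left_eq[symmetric])
  also have "(a + b mod int N) mod int N = (a + b) mod int N" by (rule mod_add_right_eq)
  also have "((a + b) mod int N - c) mod int N = (a + b - c) mod int N" by (rule mod_diff_left_eq)
  finally show "(a + b mod int N - c) mod int N = (a + b - c) mod int N" .
qed

lemma dlt_modB: "dlt N (b mod int N + a - c) = dlt N (b + a - c)"
  using dlt_modA[of N a b c] by (simp add: add.commute)

lemma dlt_modC: "dlt N (a - b mod int N) = dlt N (a - b)"
proof (rule dlt_cong)
  show "(a - b mod int N) mod int N = (a - b) mod int N" by (rule mod_diff_right_eq)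
qed

lemma nn: "N > 0 \<Longrightarrow> int (nat (m mod int N)) = m mod int N" by simp

lemma w_omg: "N > 0 \<Longrightarrow> omg N ^ i = w N (int i)" by (rule omg_pow_w)

lemma w_sum_cong: assumes "N > 0" "dlt N (int i + int j - int k) \<noteq> 0"
  shows "omg N ^ i * omg N ^ j = omg N ^ k"
proof -
  have "(int i + int j) mod int N = int k mod int N" using dlt_nz_cong[OF assms(2)] .
  hence "w N (int i + int j) = w N (int k)" by (rule w_cong)
  thus ?thesis using assms(1) by (simp add: w_omg w_add)
qed

context fixes N :: nat and a1 b1 a2 b2 b3 :: complex and F :: "int \<Rightarrow> int \<Rightarrow> complex"
  assumes N: "N > 0"
    and per1: "\<And>i j. F (i mod int N) j = F i j" and per2: "\<And>i j. F i (j mod int N) = F i j"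
begin

lemma homKF:
  assumes rec: "\<And>i j. a1 ^ 2 * a2 * b2 * w N i * F i (j - 1) + a1 * b1 * F (i - 1) j = a1 * a2 * b3 * F i j"
  shows "is_hom (Vidx N) (stdrep N (a1 * a2) b3) (Vidx N \<times> Vidx N) (tensrep (stdrep N a1 b1) (stdrep N a2 b2)) (KF N F)"
  unfolding is_hom_def meq_def
proof (intro conjI ballI)
  fix p k assume p: "p \<in> Vidx N \<times> Vidx N" and k: "k \<in> Vidx N"
  obtain i j where pij: "p = (i, j)" and i: "i < N" and j: "j < N" using p by (auto simp: Vidx_def)
  have k': "k < N" using k by (simp add: Vidx_def)
  define d where "d = dlt N (int i + int j - int k)"
  have Kij: "KF N F (i, j) k = F (int i) (int j) * d" by (simp add: KF_def d_def)
  show "mcomp (Vidx N \<times> Vidx N) (rE (tensrep (stdrep N a1 b1) (stdrep N a2 b2))) (KF N F) p k =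
        mcomp (Vidx N) (KF N F) (rE (stdrep N (a1 * a2) b3)) p k"
  proof -
    have L: "mcomp (Vidx N \<times> Vidx N) (rE (tensrep (stdrep N a1 b1) (stdrep N a2 b2))) (KF N F) p k
        = a1 ^ 2 * omg N ^ i * (a2 ^ 2 * omg N ^ j * (F (int i) (int j) * d))"
      unfolding pij TE_left[OF N i j] Kij ..
    have R: "mcomp (Vidx N) (KF N F) (rE (stdrep N (a1 * a2) b3)) p k = F (int i) (int j) * d * ((a1 * a2) ^ 2 * omg N ^ k)"
      unfolding pij mcomp_def Vidx_def E_right[OF N k'] Kij ..
    show ?thesis
    proof (cases "d = 0")
      case False
      hence "omg N ^ i * omg N ^ j = omg N ^ k" using w_sum_cong[OF N] unfolding d_def by blast
      thus ?thesis unfolding L R by (simp add: algebra_simps power_mult_distrib)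
    qed (simp add: L R)
  qed
  show "mcomp (Vidx N \<times> Vidx N) (rEi (tensrep (stdrep N a1 b1) (stdrep N a2 b2))) (KF N F) p k =
        mcomp (Vidx N) (KF N F) (rEi (stdrep N (a1 * a2) b3)) p k"
  proof -
    have L: "mcomp (Vidx N \<times> Vidx N) (rEi (tensrep (stdrep N a1 b1) (stdrep N a2 b2))) (KF N F) p k
        = inverse a1 ^ 2 * inverse (omg N) ^ i * (inverse a2 ^ 2 * inverse (omg N) ^ j * (F (int i) (int j) * d))"
      unfolding pij TEi_left[OF N i j] Kij ..
    have R: "mcomp (Vidx N) (KF N F) (rEi (stdrep N (a1 * a2) b3)) p k = F (int i) (int j) * d * (inverse (a1 * a2) ^ 2 * inverse (omg N) ^ k)"
      unfolding pij mcomp_def Vidx_def Ei_right[OF N k'] Kij ..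
    show ?thesis
    proof (cases "d = 0")
      case False
      hence "omg N ^ i * omg N ^ j = omg N ^ k" using w_sum_cong[OF N] unfolding d_def by blast
      hence "inverse (omg N) ^ i * inverse (omg N) ^ j = inverse (omg N) ^ k"
        by (metis power_inverse nonzero_inverse_mult_distrib omg_nz power_not_zero mult.commute)
      thus ?thesis unfolding L R by (simp add: algebra_simps power_mult_distrib)
    qed (simp add: L R)
  qed
  show "mcomp (Vidx N \<times> Vidx N) (rD (tensrep (stdrep N a1 b1) (stdrep N a2 b2))) (KF N F) p k =
        mcomp (Vidx N) (KF N F) (rD (stdrep N (a1 * a2) b3)) p k"
  proof -
    define e where "e = dlt N (int i + int j - 1 - int k)"
    have K1: "KF N F (i, nat ((int j - 1) mod int N)) k = F (int i) (int j - 1) * e"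
    proof -
      have "dlt N (int i + (int j - 1) mod int N - int k) = e" unfolding e_def dlt_modA by (simp add: algebra_simps)
      moreover have "KF N F (i, nat ((int j - 1) mod int N)) k = F (int i) ((int j - 1) mod int N) * dlt N (int i + (int j - 1) mod int N - int k)"
        unfolding KF_def fst_conv snd_conv nn[OF N] ..
      ultimately show ?thesis by (simp only: per2)
    qed
    have K2: "KF N F (nat ((int i - 1) mod int N), j) k = F (int i - 1) (int j) * e"
    proof -
      have "dlt N ((int i - 1) mod int N + int j - int k) = e" unfolding e_def dlt_modB by (simp add: algebra_simps)
      moreover have "KF N F (nat ((int i - 1) mod int N), j) k = F ((int i - 1) mod int N) (int j) * dlt N ((int i - 1) mod int N + int j - int k)"
        unfolding KF_def fst_conv snd_conv nn[OF N] ..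
      ultimately show ?thesis by (simp only: per1)
    qed
    have K3: "KF N F (i, j) (nat ((int k + 1) mod int N)) = F (int i) (int j) * e"
    proof -
      have "dlt N (int i + int j - (int k + 1) mod int N) = e" unfolding e_def dlt_modC by (simp add: algebra_simps)
      moreover have "KF N F (i, j) (nat ((int k + 1) mod int N)) = F (int i) (int j) * dlt N (int i + int j - (int k + 1) mod int N)"
        unfolding KF_def fst_conv snd_conv nn[OF N] ..
      ultimately show ?thesis by (simp only:)
    qed
    have L: "mcomp (Vidx N \<times> Vidx N) (rD (tensrep (stdrep N a1 b1) (stdrep N a2 b2))) (KF N F) p k
        = a1 ^ 2 * omg N ^ i * (a2 * b2 * (F (int i) (int j - 1) * e)) + a1 * b1 * (F (int i - 1) (int j) * e)"
      unfolding pij TD_left[OF N i j] K1 K2 ..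
    have R: "mcomp (Vidx N) (KF N F) (rD (stdrep N (a1 * a2) b3)) p k = F (int i) (int j) * e * (a1 * a2 * b3)"
      unfolding pij mcomp_def Vidx_def D_right[OF N] K3 ..
    have "a1 ^ 2 * a2 * b2 * w N (int i) * F (int i) (int j - 1) + a1 * b1 * F (int i - 1) (int j) = a1 * a2 * b3 * F (int i) (int j)"
      by (rule rec)
    hence "e * (a1 ^ 2 * a2 * b2 * w N (int i) * F (int i) (int j - 1) + a1 * b1 * F (int i - 1) (int j)) = e * (a1 * a2 * b3 * F (int i) (int j))"
      by simp
    thus ?thesis unfolding L R w_omg[OF N, symmetric] by (simp add: algebra_simps)
  qed
qed

end


context fixes N :: nat and a1 b1 a2 b2 b3 :: complex and G :: "int \<Rightarrow> int \<Rightarrow> complex"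
  assumes N: "N > 0"
    and per1: "\<And>i j. G (i mod int N) j = G i j" and per2: "\<And>i j. G i (j mod int N) = G i j"
begin

lemma homKbF:
  assumes rec: "\<And>i j. a1 * a2 * b3 * G i j = a1 ^ 2 * a2 * b2 * w N i * G i (j + 1) + a1 * b1 * G (i + 1) j"
  shows "is_hom (Vidx N \<times> Vidx N) (tensrep (stdrep N a1 b1) (stdrep N a2 b2)) (Vidx N) (stdrep N (a1 * a2) b3) (KbF N G)"
  unfolding is_hom_def meq_def
proof (intro conjI ballI)
  fix p k assume p: "p \<in> Vidx N \<times> Vidx N" and k: "k \<in> Vidx N"
  obtain i j where pij: "p = (i, j)" and i: "i < N" and j: "j < N" using p by (auto simp: Vidx_def)
  have k': "k < N" using k by (simp add: Vidx_def)
  define d where "d = dlt N (int i + int j - int k)"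
  have Kij: "KbF N G k (i, j) = G (int i) (int j) * d" by (simp add: KbF_def d_def)
  show "mcomp (Vidx N) (rE (stdrep N (a1 * a2) b3)) (KbF N G) k p =
        mcomp (Vidx N \<times> Vidx N) (KbF N G) (rE (tensrep (stdrep N a1 b1) (stdrep N a2 b2))) k p"
  proof -
    have R: "mcomp (Vidx N \<times> Vidx N) (KbF N G) (rE (tensrep (stdrep N a1 b1) (stdrep N a2 b2))) k p
        = G (int i) (int j) * d * (a2 ^ 2 * omg N ^ j) * (a1 ^ 2 * omg N ^ i)"
      unfolding pij TE_right[OF N i j] Kij ..
    have L: "mcomp (Vidx N) (rE (stdrep N (a1 * a2) b3)) (KbF N G) k p = (a1 * a2) ^ 2 * omg N ^ k * (G (int i) (int j) * d)"
      unfolding pij mcomp_def Vidx_def E_left[OF N k'] Kij ..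
    show ?thesis
    proof (cases "d = 0")
      case False
      hence "omg N ^ i * omg N ^ j = omg N ^ k" using w_sum_cong[OF N] unfolding d_def by blast
      thus ?thesis unfolding L R by (simp add: algebra_simps power_mult_distrib)
    qed (simp add: L R)
  qed
  show "mcomp (Vidx N) (rEi (stdrep N (a1 * a2) b3)) (KbF N G) k p =
        mcomp (Vidx N \<times> Vidx N) (KbF N G) (rEi (tensrep (stdrep N a1 b1) (stdrep N a2 b2))) k p"
  proof -
    have R: "mcomp (Vidx N \<times> Vidx N) (KbF N G) (rEi (tensrep (stdrep N a1 b1) (stdrep N a2 b2))) k p
        = G (int i) (int j) * d * (inverse a2 ^ 2 * inverse (omg N) ^ j) * (inverse a1 ^ 2 * inverse (omg N) ^ i)"
      unfolding pij TEi_right[OF N i j] Kij ..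
    have L: "mcomp (Vidx N) (rEi (stdrep N (a1 * a2) b3)) (KbF N G) k p = inverse (a1 * a2) ^ 2 * inverse (omg N) ^ k * (G (int i) (int j) * d)"
      unfolding pij mcomp_def Vidx_def Ei_left[OF N k'] Kij ..
    show ?thesis
    proof (cases "d = 0")
      case False
      hence "omg N ^ i * omg N ^ j = omg N ^ k" using w_sum_cong[OF N] unfolding d_def by blast
      hence "inverse (omg N) ^ i * inverse (omg N) ^ j = inverse (omg N) ^ k"
        by (metis power_inverse nonzero_inverse_mult_distrib omg_nz power_not_zero mult.commute)
      thus ?thesis unfolding L R by (simp add: algebra_simps power_mult_distrib)
    qed (simp add: L R)
  qed
  show "mcomp (Vidx N) (rD (stdrep N (a1 * a2) b3)) (KbF N G) k p =
        mcomp (Vidx N \<times> Vidx N) (KbF N G) (rD (tensrep (stdrep N a1 b1) (stdrep N a2 b2))) k p"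
  proof -
    define e where "e = dlt N (int i + int j + 1 - int k)"
    have K1: "KbF N G k (i, nat ((int j + 1) mod int N)) = G (int i) (int j + 1) * e"
    proof -
      have "dlt N (int i + (int j + 1) mod int N - int k) = e" unfolding e_def dlt_modA by (simp add: algebra_simps)
      moreover have "KbF N G k (i, nat ((int j + 1) mod int N)) = G (int i) ((int j + 1) mod int N) * dlt N (int i + (int j + 1) mod int N - int k)"
        unfolding KbF_def fst_conv snd_conv nn[OF N] ..
      ultimately show ?thesis by (simp only: per2)
    qed
    have K2: "KbF N G k (nat ((int i + 1) mod int N), j) = G (int i + 1) (int j) * e"
    proof -
      have "dlt N ((int i + 1) mod int N + int j - int k) = e" unfolding e_def dlt_modB by (simp add: algebra_simps)
      moreover have "KbF N G k (nat ((int i + 1) mod int N), j) = G ((int i + 1) mod int N) (int j) * dlt N ((int i + 1) mod int N + int j - int k)"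
        unfolding KbF_def fst_conv snd_conv nn[OF N] ..
      ultimately show ?thesis by (simp only: per1)
    qed
    have K3: "KbF N G (nat ((int k - 1) mod int N)) (i, j) = G (int i) (int j) * e"
    proof -
      have "dlt N (int i + int j - (int k - 1) mod int N) = e" unfolding e_def dlt_modC by (simp add: algebra_simps)
      moreover have "KbF N G (nat ((int k - 1) mod int N)) (i, j) = G (int i) (int j) * dlt N (int i + int j - (int k - 1) mod int N)"
        unfolding KbF_def fst_conv snd_conv nn[OF N] ..
      ultimately show ?thesis by (simp only:)
    qed
    have R: "mcomp (Vidx N \<times> Vidx N) (KbF N G) (rD (tensrep (stdrep N a1 b1) (stdrep N a2 b2))) k p
        = G (int i) (int j + 1) * e * (a2 * b2) * (a1 ^ 2 * omg N ^ i) + G (int i + 1) (int j) * e * (a1 * b1)"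
      unfolding pij TD_right[OF N i j] K1 K2 ..
    have L: "mcomp (Vidx N) (rD (stdrep N (a1 * a2) b3)) (KbF N G) k p = a1 * a2 * b3 * (G (int i) (int j) * e)"
      unfolding pij mcomp_def Vidx_def D_left[OF N] K3 ..
    have "a1 * a2 * b3 * G (int i) (int j) = a1 ^ 2 * a2 * b2 * w N (int i) * G (int i) (int j + 1) + a1 * b1 * G (int i + 1) (int j)"
      by (rule rec)
    hence "e * (a1 * a2 * b3 * G (int i) (int j)) = e * (a1 ^ 2 * a2 * b2 * w N (int i) * G (int i) (int j + 1) + a1 * b1 * G (int i + 1) (int j))"
      by simp
    thus ?thesis unfolding L R w_omg[OF N, symmetric] by (simp add: algebra_simps)
  qed
qed

end

lemma tens_mid: "tens mid mid = (mid :: ('a \<times> 'b, 'a \<times> 'b) mat)"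
  by (intro ext) (auto simp: tens_def mid_def split: if_splits)

lemma sum_reflect: assumes N: "N > 0" and per: "\<And>n. f (n mod int N) = f n"
  shows "(\<Sum>k\<in>{0..<N}. f (c - int k)) = (\<Sum>k\<in>{0..<N}. f (int k))"
proof -
  have nn: "int (nat (m mod int N)) = m mod int N" for m using N by simp
  have lt: "nat (m mod int N) \<in> {0..<N}" for m using N by (simp add: nat_less_iff)
  have "(\<Sum>k\<in>{0..<N}. f (c - int k)) = (\<Sum>k\<in>{0..<N}. f (int (nat ((c - int k) mod int N))))"
    by (rule sum.cong[OF refl]) (simp only: nn per)
  also have "\<dots> = (\<Sum>k\<in>{0..<N}. f (int k))"
  proof (rule sum.reindex_bij_witness[where i = "\<lambda>k. nat ((c - int k) mod int N)" and j = "\<lambda>k. nat ((c - int k) mod int N)"])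
    fix a assume a: "a \<in> {0..<N}"
    have "(c - int (nat ((c - int a) mod int N))) mod int N = (c - (c - int a) mod int N) mod int N"
      by (simp only: nn)
    also have "\<dots> = (c - (c - int a)) mod int N" by (rule mod_diff_right_eq)
    also have "\<dots> = int a" using a by simp
    finally show "nat ((c - int (nat ((c - int a) mod int N))) mod int N) = a" by simp
    thus "nat ((c - int (nat ((c - int a) mod int N))) mod int N) = a" .
  next
    fix a show "nat ((c - int a) mod int N) \<in> {0..<N}" by (rule lt)
    thus "nat ((c - int a) mod int N) \<in> {0..<N}" .
  qed simp
  finally show ?thesis .
qed

locale S5 =
  fixes N :: nat and rt :: "complex \<Rightarrow> complex" and h ar yr am ym :: complex
  assumes N: "N > 0" and rt: "\<forall>u. rt u ^ N = u"
    and ar: "ar \<noteq> 0" and yr: "yr \<noteq> 0" and am: "am \<noteq> 0" and ym: "ym \<noteq> 0" and h: "h \<noteq> 0"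
begin

abbreviation "xx \<equiv> ar * ym"
abbreviation "yy \<equiv> yr / am"
abbreviation "zz \<equiv> yprod N rt ar yr am ym"
abbreviation "ch \<alpha> \<equiv> omg_half N ^ nat (int \<alpha> ^ 2)"

lemma Fermat: "zz ^ N = xx ^ N + yy ^ N"
  using rt unfolding yprod_def by (simp add: power_mult_distrib power_divide divide_inverse power_inverse)

sublocale qd N xx yy zz
  using N ar yr am ym Fermat by unfold_locales auto

lemma ch_nz: "ch \<alpha> \<noteq> 0" by (simp add: omg_half_def omg_nz)
lemma ohz: "omg_half N \<noteq> 0" by (simp add: omg_half_def omg_nz)

definition Fk :: "nat \<Rightarrow> int \<Rightarrow> int \<Rightarrow> complex" where
  "Fk \<alpha> i j = h * w N (int \<alpha> * j) * (qdl N xx yy zz (i - int \<alpha>) * ch \<alpha>)"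

definition Gk :: "nat \<Rightarrow> int \<Rightarrow> int \<Rightarrow> complex" where
  "Gk \<alpha> i j = qbr N (xx / zz) / h * (w N (- (int \<alpha> * j)) / (qdl N (xx / omg N) yy zz (i - int \<alpha>) * ch \<alpha>))"

lemma Kmap_eq: "Kmap N rt h ar yr am ym \<alpha> = KF N (Fk \<alpha>)"
proof (intro ext)
  fix p :: "nat \<times> nat" and k :: nat
  obtain i j where p: "p = (i, j)" by (cases p)
  show "Kmap N rt h ar yr am ym \<alpha> p k = KF N (Fk \<alpha>) p k"
    unfolding p Kmap_def KF_def Fk_def qdl2_def by (simp add: omg_pow_w[OF N] mult_ac)
qed

lemma Kbar_eq: "Kbar N rt h ar yr am ym \<alpha> = KbF N (Gk \<alpha>)"
proof (intro ext)
  fix p :: "nat \<times> nat" and k :: nat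
  obtain i j where p: "p = (i, j)" by (cases p)
  have inv: "inverse (omg N) ^ (\<alpha> * j) = w N (- (int \<alpha> * int j))"
    by (simp add: power_inverse omg_pow_w[OF N] w_minus[OF N])
  show "Kbar N rt h ar yr am ym \<alpha> k p = KbF N (Gk \<alpha>) k p"
    unfolding p Kbar_def KbF_def Gk_def qdl2_def by (simp add: inv mult_ac divide_inverse)
qed

lemma Fk_per1: "Fk \<alpha> (i mod int N) j = Fk \<alpha> i j"
proof -
  have "qdl N xx yy zz (i mod int N - int \<alpha>) = qdl N xx yy zz (i - int \<alpha>)"
    by (rule qdl_cong) (simp add: mod_diff_left_eq)
  thus ?thesis by (simp add: Fk_def)
qed

lemma Fk_per2: "Fk \<alpha> i (j mod int N) = Fk \<alpha> i j"
proof -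
  have "w N (int \<alpha> * (j mod int N)) = w N (int \<alpha> * j)"
    by (rule w_cong) (simp add: mod_mult_right_eq)
  thus ?thesis by (simp add: Fk_def)
qed

lemma Gk_per1: "Gk \<alpha> (i mod int N) j = Gk \<alpha> i j"
proof -
  have "qdl N (xx / omg N) yy zz (i mod int N - int \<alpha>) = qdl N (xx / omg N) yy zz (i - int \<alpha>)"
    by (rule qdl_cong) (simp add: mod_diff_left_eq)
  thus ?thesis by (simp add: Gk_def)
qed

lemma Gk_per2: "Gk \<alpha> i (j mod int N) = Gk \<alpha> i j"
proof -
  have "w N (- (int \<alpha> * (j mod int N))) = w N (- (int \<alpha> * j))"
    by (rule w_cong, rule mod_minus_cong) (simp add: mod_mult_right_eq)
  thus ?thesis by (simp add: Gk_def)
qed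

lemma Fk_rec: "ar ^ 2 * am * ym * w N i * Fk \<alpha> i (j - 1) + ar * yr * Fk \<alpha> (i - 1) j = ar * am * zz * Fk \<alpha> i j"
proof -
  define A where "A = qdl N xx yy zz (i - int \<alpha>)"
  define A1 where "A1 = qdl N xx yy zz (i - int \<alpha> - 1)"
  define W where "W = w N (int \<alpha>)"
  have Wnz: "W \<noteq> 0" unfolding W_def by (rule w_nz)
  have e1: "w N (int \<alpha> * (j - 1)) = w N (int \<alpha> * j) / W"
    unfolding W_def using w_diff[OF N, of "int \<alpha> * j" "int \<alpha>"] by (simp add: algebra_simps)
  have e2: "w N (i - int \<alpha>) = w N i / W" unfolding W_def by (rule w_diff[OF N])
  have r: "yy * A1 = (zz - xx * (w N i / W)) * A"
    unfolding A_def A1_def e2[symmetric] by (rule qdl_rec)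
  have F1: "Fk \<alpha> i (j - 1) = h * (w N (int \<alpha> * j) / W) * (A * ch \<alpha>)" unfolding Fk_def A_def e1 ..
  have F2: "Fk \<alpha> (i - 1) j = h * w N (int \<alpha> * j) * (A1 * ch \<alpha>)"
    unfolding Fk_def A1_def by (simp add: algebra_simps)
  have F3: "Fk \<alpha> i j = h * w N (int \<alpha> * j) * (A * ch \<alpha>)" unfolding Fk_def A_def ..
  have A1e: "A1 = (zz - xx * (w N i / W)) * A * am / yr" using r yr am by (simp add: field_simps)
  show ?thesis unfolding F1 F2 F3 A1e using Wnz am yr by (simp add: field_simps power2_eq_square)
qed

lemma Gk_rec: "ar * am * zz * Gk \<alpha> i j = ar ^ 2 * am * ym * w N i * Gk \<alpha> i (j + 1) + ar * yr * Gk \<alpha> (i + 1) j"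
proof -
  define B where "B = qdl N (xx / omg N) yy zz (i - int \<alpha>)"
  define B1 where "B1 = qdl N (xx / omg N) yy zz (i + 1 - int \<alpha>)"
  define W where "W = w N (int \<alpha>)"
  define C where "C = qbr N (xx / zz) / h"
  define V where "V = w N (- (int \<alpha> * j))"
  have Wnz: "W \<noteq> 0" unfolding W_def by (rule w_nz)
  have Bnz: "B \<noteq> 0" "B1 \<noteq> 0" unfolding B_def B1_def by (rule B_nz)+
  have eqa: "- (int \<alpha> * (j + 1)) = - (int \<alpha> * j) - int \<alpha>" by (simp add: algebra_simps)
  have e1: "w N (- (int \<alpha> * (j + 1))) = V / W"
    unfolding W_def V_def eqa by (rule w_diff[OF N])
  have e2: "w N (i - int \<alpha>) = w N i / W" unfolding W_def by (rule w_diff[OF N])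
  have r: "yy * B = (zz - xx * (w N i / W)) * B1"
  proof -
    have "yy * qdl N (xx / omg N) yy zz (i + 1 - int \<alpha> - 1) = (zz - xx * w N (i + 1 - int \<alpha> - 1)) * B1"
      unfolding B1_def by (rule B_rec)
    moreover have "i + 1 - int \<alpha> - 1 = i - int \<alpha>" by simp
    ultimately show ?thesis unfolding B_def e2[symmetric] by simp
  qed
  have G1: "Gk \<alpha> i (j + 1) = C * ((V / W) / (B * ch \<alpha>))" unfolding Gk_def B_def C_def e1 ..
  have G2: "Gk \<alpha> (i + 1) j = C * (V / (B1 * ch \<alpha>))"
    unfolding Gk_def B1_def C_def V_def by (simp add: algebra_simps)
  have G3: "Gk \<alpha> i j = C * (V / (B * ch \<alpha>))" unfolding Gk_def B_def C_def V_def ..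
  have B1e: "B1 = yy * B / (zz - xx * (w N i / W))"
  proof -
    have "zz - xx * (w N i / W) \<noteq> 0" using r Bnz yr am by auto
    thus ?thesis using r Wnz am by (simp add: field_simps)
  qed
  have nz: "zz - xx * (w N i / W) \<noteq> 0" using r Bnz yr am by auto
  have ohz: "omg_half N \<noteq> 0" by (simp add: omg_half_def omg_nz)
  show ?thesis unfolding G1 G2 G3 B1e using Wnz am yr Bnz ch_nz[of \<alpha>] nz ohz by (simp add: field_simps power2_eq_square)
qed

lemma homK: "is_hom (Vidx N) (stdrep N (ar * am) zz) (Vidx N \<times> Vidx N) (tensrep (stdrep N ar yr) (stdrep N am ym)) (Kmap N rt h ar yr am ym \<alpha>)"
  unfolding Kmap_eq by (rule homKF[OF N Fk_per1 Fk_per2 Fk_rec])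

lemma homKb: "is_hom (Vidx N \<times> Vidx N) (tensrep (stdrep N ar yr) (stdrep N am ym)) (Vidx N) (stdrep N (ar * am) zz) (Kbar N rt h ar yr am ym \<alpha>)"
  unfolding Kbar_eq by (rule homKbF[OF N Gk_per1 Gk_per2 Gk_rec])


lemma zz_nz: assumes cyc: "cyclic_rep (Vidx N \<times> Vidx N) (tensrep (stdrep N ar yr) (stdrep N am ym))"
  shows "zz \<noteq> 0"
proof
  assume z0: "zz = 0"
  let ?V2 = "Vidx N \<times> Vidx N" and ?D = "rD (tensrep (stdrep N ar yr) (stdrep N am ym))"
  let ?K = "Kmap N rt h ar yr am ym 0"
  obtain Bm where Bm: "meq ?V2 ?V2 (mcomp ?V2 Bm ?D) mid"
    using cyc unfolding cyclic_rep_def minvertible_def by blast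
  have hD: "meq ?V2 (Vidx N) (mcomp ?V2 ?D ?K) (mcomp (Vidx N) ?K (rD (stdrep N (ar * am) zz)))"
    using homK[of 0] unfolding is_hom_def by blast
  have D0: "rD (stdrep N (ar * am) zz) = (\<lambda>_ _. 0)" using z0 by (simp add: stdrep_def)
  have p0: "(0, 0) \<in> ?V2" and k0: "(0::nat) \<in> Vidx N" using N by (auto simp: Vidx_def)
  have fin: "finite ?V2" "finite (Vidx N)" by (simp_all add: Vidx_def)
  have "?K (0, 0) 0 = mcomp ?V2 mid ?K (0, 0) 0"
    unfolding mcomp_def using sum_mid_left[OF fin(1) p0, of "\<lambda>q. ?K q 0"] by simp
  also have "\<dots> = mcomp ?V2 (mcomp ?V2 Bm ?D) ?K (0, 0) 0"
    by (rule mcomp_cong_left[OF Bm p0, symmetric])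
  also have "\<dots> = mcomp ?V2 Bm (mcomp ?V2 ?D ?K) (0, 0) 0"
    by (simp add: mcomp_assoc[OF fin(1) fin(1)])
  also have "\<dots> = mcomp ?V2 Bm (mcomp (Vidx N) ?K (rD (stdrep N (ar * am) zz))) (0, 0) 0"
    by (rule mcomp_cong_right[OF hD k0])
  also have "\<dots> = 0" unfolding D0 by (simp add: mcomp_def)
  finally have "?K (0, 0) 0 = 0" .
  moreover have "?K (0, 0) 0 = h" by (simp add: Kmap_def qdl2_def qdl_0 dlt_def)
  ultimately show False using h by simp
qed


abbreviation "Cq \<equiv> qbr N (xx / zz) / h"

lemma f_per: "(\<lambda>m. w N (- (m * d)) * Tq N xx yy zz d m) (n mod int N) = (\<lambda>m. w N (- (m * d)) * Tq N xx yy zz d m) n"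
proof -
  have "w N (- (n mod int N * d)) = w N (- (n * d))"
    by (rule w_cong, rule mod_minus_cong, rule mod_mult_cong) simp_all
  thus ?thesis by (simp add: T_per)
qed

lemma FG_prod: "Gk \<alpha> i j * Fk \<beta> i j = Cq * h * (ch \<beta> / ch \<alpha>) * w N ((int \<beta> - int \<alpha>) * j)
    * (qdl N xx yy zz (i - int \<beta>) / qdl N (xx / omg N) yy zz (i - int \<alpha>))"
proof -
  have "w N (- (int \<alpha> * j)) * w N (int \<beta> * j) = w N ((int \<beta> - int \<alpha>) * j)"
    using w_add[OF N, of "- (int \<alpha> * j)" "int \<beta> * j"] by (simp add: algebra_simps)
  thus ?thesis unfolding Gk_def Fk_def using ch_nz[of \<alpha>] B_nz ohz
    by (simp add: field_simps)
qed

lemma dual_entry: assumes z0: "zz \<noteq> 0" and a: "\<alpha> < N" and b: "\<beta> < N" and k: "k < N" and k': "k' < N"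
  shows "mcomp (Vidx N \<times> Vidx N) (Kbar N rt h ar yr am ym \<alpha>) (Kmap N rt h ar yr am ym \<beta>) k k'
    = dlt N (int \<alpha> - int \<beta>) * mid k k'"
proof -
  define d where "d = int \<beta> - int \<alpha>"
  define f where "f m = w N (- (m * d)) * Tq N xx yy zz d m" for m
  have fper: "f (n mod int N) = f n" for n unfolding f_def using f_per[where d = d and n = n] by simp
  define K0 where "K0 = Cq * h * (ch \<beta> / ch \<alpha>) * w N (d * (int k - int \<beta>))"
  have inner: "(\<Sum>j\<in>{0..<N}. Gk \<alpha> (int i) (int j) * dlt N (int i + int j - int k) * (Fk \<beta> (int i) (int j) * dlt N (int i + int j - int k')))
      = Gk \<alpha> (int i) (int k - int i) * Fk \<beta> (int i) (int k - int i) * dlt N (int k - int k')" for i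
  proof -
    have "(\<Sum>j\<in>{0..<N}. Gk \<alpha> (int i) (int j) * dlt N (int i + int j - int k) * (Fk \<beta> (int i) (int j) * dlt N (int i + int j - int k')))
      = (\<Sum>j\<in>{0..<N}. (Gk \<alpha> (int i) (int j) * Fk \<beta> (int i) (int j) * dlt N (int i + int j - int k')) * dlt N (int j - (int k - int i)))"
      by (intro sum.cong refl) (simp add: algebra_simps)
    also have "\<dots> = Gk \<alpha> (int i) (int (nat ((int k - int i) mod int N))) * Fk \<beta> (int i) (int (nat ((int k - int i) mod int N)))
        * dlt N (int i + int (nat ((int k - int i) mod int N)) - int k')"
      by (rule sum_dlt[OF N])
    also have "\<dots> = Gk \<alpha> (int i) ((int k - int i) mod int N) * Fk \<beta> (int i) ((int k - int i) mod int N)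
        * dlt N (int i + (int k - int i) mod int N - int k')"
      by (simp only: nn[OF N])
    also have "\<dots> = Gk \<alpha> (int i) (int k - int i) * Fk \<beta> (int i) (int k - int i) * dlt N (int i + (int k - int i) - int k')"
      by (simp only: Gk_per2 Fk_per2 dlt_modA)
    finally show ?thesis by simp
  qed
  have pt: "Gk \<alpha> (int i) (int k - int i) * Fk \<beta> (int i) (int k - int i) = K0 * f (int i + - int \<beta>)" for i
  proof -
    have e1: "w N (d * (int k - int i)) = w N (d * (int k - int \<beta>)) * w N (- ((int i + - int \<beta>) * d))"
    proof -
      have "d * (int k - int i) = d * (int k - int \<beta>) + - ((int i + - int \<beta>) * d)" by (simp add: algebra_simps)
      thus ?thesis by (simp only: w_add[OF N])
    qed
    have e2: "int i + - int \<beta> + d = int i - int \<alpha>" unfolding d_def by simp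
    show ?thesis unfolding FG_prod d_def[symmetric] f_def K0_def Tq_def e2 e1
      by (simp add: algebra_simps)
  qed
  have "mcomp (Vidx N \<times> Vidx N) (Kbar N rt h ar yr am ym \<alpha>) (Kmap N rt h ar yr am ym \<beta>) k k'
      = (\<Sum>i\<in>{0..<N}. \<Sum>j\<in>{0..<N}. Gk \<alpha> (int i) (int j) * dlt N (int i + int j - int k) * (Fk \<beta> (int i) (int j) * dlt N (int i + int j - int k')))"
    unfolding Kbar_eq Kmap_eq mcomp_def Vidx_def sum_pair KF_def KbF_def by simp
  also have "\<dots> = (\<Sum>i\<in>{0..<N}. K0 * f (int i + - int \<beta>)) * dlt N (int k - int k')"
    unfolding inner pt by (simp add: sum_distrib_right)
  also have "(\<Sum>i\<in>{0..<N}. K0 * f (int i + - int \<beta>)) = K0 * Sq N xx yy zz d"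
    unfolding sum_distrib_left[symmetric] sum_shift[where f = f, OF N fper]
    unfolding f_def Sq_def ..
  finally have M: "mcomp (Vidx N \<times> Vidx N) (Kbar N rt h ar yr am ym \<alpha>) (Kmap N rt h ar yr am ym \<beta>) k k'
      = K0 * Sq N xx yy zz d * dlt N (int k - int k')" .
  show ?thesis
  proof (cases "\<alpha> = \<beta>")
    case True
    hence "d = 0" unfolding d_def by simp
    hence "K0 * Sq N xx yy zz d = 1"
      unfolding K0_def using S_zero[OF z0, of d] ch_nz[of \<alpha>] h True by (simp add: field_simps)
    thus ?thesis unfolding M using True dlt_small[OF k k'] by (simp add: mid_def dlt_def)
  next
    case False
    have "d mod int N \<noteq> 0"
    proof
      assume "d mod int N = 0"
      hence "int \<beta> mod int N = int \<alpha> mod int N" unfolding d_def by (metis mod_eq_dvd_iff dvd_eq_mod_eq_0)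
      thus False using False a b by simp
    qed
    hence "Sq N xx yy zz d = 0" by (rule S_vanish[OF z0])
    thus ?thesis unfolding M using False dlt_small[OF a b] by simp
  qed
qed


lemma FG_prod2: "Fk \<alpha> i j * Gk \<alpha> i' j' = Cq * h * w N (int \<alpha> * (j - j'))
    * (qdl N xx yy zz (i - int \<alpha>) / qdl N (xx / omg N) yy zz (i' - int \<alpha>))"
proof -
  have "w N (int \<alpha> * j) * w N (- (int \<alpha> * j')) = w N (int \<alpha> * (j - j'))"
    using w_add[OF N, of "int \<alpha> * j" "- (int \<alpha> * j')"] by (simp add: algebra_simps)
  thus ?thesis unfolding Gk_def Fk_def using ch_nz[of \<alpha>] B_nz ohz
    by (simp add: field_simps)
qed

lemma compl_entry: assumes z0: "zz \<noteq> 0" and i: "i < N" and j: "j < N" and i': "i' < N" and j': "j' < N"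
  shows "(\<Sum>\<alpha><N. mcomp (Vidx N) (Kmap N rt h ar yr am ym \<alpha>) (Kbar N rt h ar yr am ym \<alpha>) (i, j) (i', j'))
    = mid (i, j) (i', j')"
proof -
  define D where "D = dlt N (int i' + int j' - (int i + int j))"
  have ent: "mcomp (Vidx N) (Kmap N rt h ar yr am ym \<alpha>) (Kbar N rt h ar yr am ym \<alpha>) (i, j) (i', j')
      = Fk \<alpha> (int i) (int j) * Gk \<alpha> (int i') (int j') * D" for \<alpha>
  proof -
    have "mcomp (Vidx N) (Kmap N rt h ar yr am ym \<alpha>) (Kbar N rt h ar yr am ym \<alpha>) (i, j) (i', j')
        = (\<Sum>k\<in>{0..<N}. (Fk \<alpha> (int i) (int j) * Gk \<alpha> (int i') (int j') * dlt N (int i' + int j' - int k)) * dlt N (int k - (int i + int j)))"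
      unfolding Kbar_eq Kmap_eq mcomp_def Vidx_def KF_def KbF_def
      by (intro sum.cong refl) (simp add: dlt_swap[of N "int i + int j"] mult_ac)
    also have "\<dots> = Fk \<alpha> (int i) (int j) * Gk \<alpha> (int i') (int j') * dlt N (int i' + int j' - int (nat ((int i + int j) mod int N)))"
      by (rule sum_dlt[OF N])
    also have "\<dots> = Fk \<alpha> (int i) (int j) * Gk \<alpha> (int i') (int j') * D"
      unfolding nn[OF N] dlt_modC D_def ..
    finally show ?thesis .
  qed
  show ?thesis
  proof (cases "D = 0")
    case True
    have "mid (i, j) (i', j') = 0"
    proof (rule ccontr)
      assume "mid (i, j) (i', j') \<noteq> 0"
      hence "i = i'" "j = j'" by (auto simp: mid_def split: if_splits)
      thus False using True unfolding D_def by (simp add: dlt_def)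
    qed
    thus ?thesis unfolding ent True by simp
  next
    case False
    have cg: "(int i' + int j') mod int N = (int i + int j) mod int N" using dlt_nz_cong False unfolding D_def by blast
    have D1: "D = 1" unfolding D_def dlt_def using cg by (metis mod_eq_dvd_iff dvd_eq_mod_eq_0)
    define d where "d = int i' - int i"
    have hj: "(int j - int j') mod int N = d mod int N"
    proof -
      have "int N dvd ((int i' + int j') - (int i + int j))" using cg by (simp add: mod_eq_dvd_iff)
      moreover have "(int i' + int j') - (int i + int j) = d - (int j - int j')" unfolding d_def by simp
      ultimately have "int N dvd (d - (int j - int j'))" by simp
      hence "int N dvd (int j - int j' - d)" using dvd_minus_iff[of "int N" "d - (int j - int j')"] by simp
      thus ?thesis by (simp add: mod_eq_dvd_iff)
    qed
    define f where "f m = w N (- (m * d)) * Tq N xx yy zz d m" for m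
    have fper: "f (n mod int N) = f n" for n unfolding f_def using f_per[where d = d and n = n] by simp
    have pt: "Fk \<alpha> (int i) (int j) * Gk \<alpha> (int i') (int j') = Cq * h * w N (int i * d) * f (int i - int \<alpha>)" for \<alpha>
    proof -
      have e0: "w N (int \<alpha> * (int j - int j')) = w N (int \<alpha> * d)"
        by (rule w_cong, rule mod_mult_cong[OF refl hj])
      have e1: "w N (int \<alpha> * d) = w N (int i * d) * w N (- ((int i - int \<alpha>) * d))"
      proof -
        have "int \<alpha> * d = int i * d + - ((int i - int \<alpha>) * d)" by (simp add: algebra_simps)
        thus ?thesis by (simp only: w_add[OF N])
      qed
      have e2: "int i - int \<alpha> + d = int i' - int \<alpha>" unfolding d_def by simp
      show ?thesis unfolding FG_prod2 e0 e1 f_def Tq_def e2 by (simp add: algebra_simps)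
    qed
    have "(\<Sum>\<alpha><N. mcomp (Vidx N) (Kmap N rt h ar yr am ym \<alpha>) (Kbar N rt h ar yr am ym \<alpha>) (i, j) (i', j'))
        = Cq * h * w N (int i * d) * (\<Sum>\<alpha>\<in>{0..<N}. f (int i - int \<alpha>))"
      unfolding ent pt D1 by (simp add: sum_distrib_left atLeast0LessThan)
    also have "(\<Sum>\<alpha>\<in>{0..<N}. f (int i - int \<alpha>)) = Sq N xx yy zz d"
      unfolding sum_reflect[where f = f, OF N fper] unfolding f_def Sq_def ..
    finally have M: "(\<Sum>\<alpha><N. mcomp (Vidx N) (Kmap N rt h ar yr am ym \<alpha>) (Kbar N rt h ar yr am ym \<alpha>) (i, j) (i', j'))
        = Cq * h * w N (int i * d) * Sq N xx yy zz d" .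
    show ?thesis
    proof (cases "i = i'")
      case True
      hence d0: "d = 0" unfolding d_def by simp
      have "int N dvd (int j' - int j)" using cg True by (simp add: mod_eq_dvd_iff)
      hence "int j' mod int N = int j mod int N" by (simp add: mod_eq_dvd_iff)
      hence "j = j'" using j j' by simp
      moreover have "Cq * h * w N (int i * d) * Sq N xx yy zz d = 1"
        using S_zero[OF z0, of d] d0 h by (simp add: field_simps)
      ultimately show ?thesis unfolding M using True by (simp add: mid_def)
    next
      case False
      have "d mod int N \<noteq> 0"
      proof
        assume "d mod int N = 0"
        hence "int i' mod int N = int i mod int N" unfolding d_def by (metis mod_eq_dvd_iff dvd_eq_mod_eq_0)
        thus False using False i i' by simp
      qed
      hence "Sq N xx yy zz d = 0" by (rule S_vanish[OF z0])
      thus ?thesis unfolding M using False by (simp add: mid_def)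
    qed
  qed
qed


theorem main:
  assumes cyc: "cyclic_rep (Vidx N \<times> Vidx N) (tensrep (stdrep N ar yr) (stdrep N am ym))"
  shows
    "is_hom_basis N (Vidx N) (stdrep N (ar * am) (yprod N rt ar yr am ym))
        (Vidx N \<times> Vidx N) (tensrep (stdrep N ar yr) (stdrep N am ym))
        (Kmap N rt h ar yr am ym)
   \<and> is_hom_basis N (Vidx N \<times> Vidx N) (tensrep (stdrep N ar yr) (stdrep N am ym))
        (Vidx N) (stdrep N (ar * am) (yprod N rt ar yr am ym))
        (Kbar N rt h ar yr am ym)
   \<and> (\<forall>\<alpha><N. \<forall>\<beta><N.
        meq (Vidx N) (Vidx N)
          (mcomp (Vidx N \<times> Vidx N) (Kbar N rt h ar yr am ym \<alpha>) (Kmap N rt h ar yr am ym \<beta>))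
          (\<lambda>x y. dlt N (int \<alpha> - int \<beta>) * mid x y))
   \<and> meq (Vidx N \<times> Vidx N) (Vidx N \<times> Vidx N)
        (\<lambda>x y. \<Sum>\<alpha><N. mcomp (Vidx N) (Kmap N rt h ar yr am ym \<alpha>) (Kbar N rt h ar yr am ym \<alpha>) x y)
        (tens mid mid)"
proof -
  have z0: "zz \<noteq> 0" by (rule zz_nz[OF cyc])
  have finI: "finite (Vidx N)" and finJ: "finite (Vidx N \<times> Vidx N)" by (simp_all add: Vidx_def)
  have x0: "0 \<in> Vidx N" using N by (simp add: Vidx_def)
  have dual: "meq (Vidx N) (Vidx N)
          (mcomp (Vidx N \<times> Vidx N) (Kbar N rt h ar yr am ym \<alpha>) (Kmap N rt h ar yr am ym \<beta>))
          (\<lambda>x y. dlt N (int \<alpha> - int \<beta>) * mid x y)" if "\<alpha> < N" "\<beta> < N" for \<alpha> \<beta>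
    unfolding meq_def
  proof (intro ballI)
    fix k k' assume "k \<in> Vidx N" "k' \<in> Vidx N"
    hence "k < N" "k' < N" by (auto simp: Vidx_def)
    thus "mcomp (Vidx N \<times> Vidx N) (Kbar N rt h ar yr am ym \<alpha>) (Kmap N rt h ar yr am ym \<beta>) k k' = dlt N (int \<alpha> - int \<beta>) * mid k k'"
      by (rule dual_entry[OF z0 that])
  qed
  have compl: "meq (Vidx N \<times> Vidx N) (Vidx N \<times> Vidx N)
        (\<lambda>x y. \<Sum>\<alpha><N. mcomp (Vidx N) (Kmap N rt h ar yr am ym \<alpha>) (Kbar N rt h ar yr am ym \<alpha>) x y) mid"
    unfolding meq_def
  proof (intro ballI)
    fix p q assume "p \<in> Vidx N \<times> Vidx N" "q \<in> Vidx N \<times> Vidx N"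
    then obtain i j i' j' where pq: "p = (i, j)" "q = (i', j')" "i < N" "j < N" "i' < N" "j' < N"
      by (auto simp: Vidx_def)
    show "(\<Sum>\<alpha><N. mcomp (Vidx N) (Kmap N rt h ar yr am ym \<alpha>) (Kbar N rt h ar yr am ym \<alpha>) p q) = mid p q"
      unfolding pq(1,2) by (rule compl_entry[OF z0 pq(3-6)])
  qed
  have sch: "meq (Vidx N) (Vidx N) M (\<lambda>x y. M 0 0 * mid x y)"
    if "is_hom (Vidx N) (stdrep N (ar * am) zz) (Vidx N) (stdrep N (ar * am) zz) M" for M
    using schur[OF N _ z0 that] ar am by simp
  have B: "is_hom_basis N (Vidx N) (stdrep N (ar * am) zz) (Vidx N \<times> Vidx N) (tensrep (stdrep N ar yr) (stdrep N am ym)) (Kmap N rt h ar yr am ym)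
      \<and> is_hom_basis N (Vidx N \<times> Vidx N) (tensrep (stdrep N ar yr) (stdrep N am ym)) (Vidx N) (stdrep N (ar * am) zz) (Kbar N rt h ar yr am ym)"
    by (rule basis_dual[OF finI finJ x0 homK homKb dual compl sch])
  show ?thesis using B dual compl unfolding tens_mid by blast
qed

end

theorem proposition5p1:
  fixes N :: nat and rt :: "complex \<Rightarrow> complex" and h ar yr am ym :: complex
  assumes "odd N" and "N \<ge> 3"
    and "\<forall>u. rt u ^ N = u"
    and "ar \<noteq> 0" and "yr \<noteq> 0" and "am \<noteq> 0" and "ym \<noteq> 0"
    and "cyclic_rep (Vidx N \<times> Vidx N) (tensrep (stdrep N ar yr) (stdrep N am ym))"
    and "h \<noteq> 0"
  shows
    "is_hom_basis N (Vidx N) (stdrep N (ar * am) (yprod N rt ar yr am ym))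
        (Vidx N \<times> Vidx N) (tensrep (stdrep N ar yr) (stdrep N am ym))
        (Kmap N rt h ar yr am ym)
   \<and> is_hom_basis N (Vidx N \<times> Vidx N) (tensrep (stdrep N ar yr) (stdrep N am ym))
        (Vidx N) (stdrep N (ar * am) (yprod N rt ar yr am ym))
        (Kbar N rt h ar yr am ym)
   \<and> (\<forall>\<alpha><N. \<forall>\<beta><N.
        meq (Vidx N) (Vidx N)
          (mcomp (Vidx N \<times> Vidx N) (Kbar N rt h ar yr am ym \<alpha>) (Kmap N rt h ar yr am ym \<beta>))
          (\<lambda>x y. dlt N (int \<alpha> - int \<beta>) * mid x y))
   \<and> meq (Vidx N \<times> Vidx N) (Vidx N \<times> Vidx N)
        (\<lambda>x y. \<Sum>\<alpha><N. mcomp (Vidx N) (Kmap N rt h ar yr am ym \<alpha>) (Kbar N rt h ar yr am ym \<alpha>) x y)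
        (tens mid mid)"
proof -
  have N: "N > 0" using assms(2) by simp
  interpret S5 N rt h ar yr am ym using N assms by unfold_locales auto
  show ?thesis by (rule main[OF assms(8)])
qed

end
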